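(* Let $\Bbbk$ be a field of characteristic $\neq 2$ and let $A_1,\dots,A_m\in\Bbbk^{n\times n}$ be symmetric matrices. Fix an integer $t\ge 1$. The map sending an ordered simultaneous block decomposition $(V_1,\dots,V_t)$ of $A_1,\dots,A_m$ to the $t$-tuple $(\epsilon_1,\dots,\epsilon_t)$, where $\epsilon_j\in\Bbbk^{n\times n}$ is the projection of $\Bbbk^n$ onto $V_j$ along $\bigoplus_{l\neq j}V_l$, is a bijection from the set of ordered simultaneous block decompositions of length $t$ of $A_1,\dots,A_m$ onto the set of ordered complete sets of $t$ orthogonal idempotents of $Z(A_1,\dots,A_m)$. In particular, $A_1,\dots,A_m$ admit a simultaneous block diagonalization via congruence with $t$ blocks, i.e. there are $P\in \mathrm{GL}_n(\Bbbk)$ and $n_1,\dots,n_t\ge 1$ with $\sum_j n_j=n$ such that every $P^TA_iP$ is block diagonal with diagonal blocks of sizes $n_1,\dots,n_t$, if and only if $Z(A_1,\dots,A_m)$ contains a complete set of $t$ orthogonal idempotents.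
   Context: The center of symmetric matrices $A_1,\dots,A_m\in\Bbbk^{n\times n}$ is $Z(A_1,\dots,A_m)=\{X\in\Bbbk^{n\times n} : (A_iX)^T=A_iX \text{ for all } 1\le i\le m\}$. An ordered simultaneous block decomposition of length $t$ of $A_1,\dots,A_m$ is a $t$-tuple $(V_1,\dots,V_t)$ of nonzero subspaces of $\Bbbk^n$ with $\Bbbk^n=V_1\oplus\cdots\oplus V_t$ such that $x^TA_iy=0$ for all $i$, all $j\neq l$, all $x\in V_j$, $y\in V_l$ (equivalently, if $P$ is an invertible matrix whose columns are a basis of $V_1$ followed by a basis of $V_2$, etc., then each $P^TA_iP$ is block diagonal with blocks of sizes $\dim V_1,\dots,\dim V_t$). An ordered complete set of $t$ orthogonal idempotents of $Z(A_1,\dots,A_m)$ is a $t$-tuple $(\epsilon_1,\dots,\epsilon_t)$ of nonzero matrices in $Z(A_1,\dots,A_m)$ with $\epsilon_j^2=\epsilon_j$ for all $j$, $\epsilon_j\epsilon_l=0$ for $j\neq l$, and $\sum_j\epsilon_j=I_n$ (matrix products). *)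

theory Defs
  imports "Jordan_Normal_Form.Matrix"
begin

text \<open>Matrices are JNF matrices of dimension n x n over a field; the symmetric
  matrices A_1..A_m are given as a list As (m = length As); t-tuples are
  functions on {..<t} (0-indexed), extensional outside {..<t}.\<close>

definition vsum :: "nat \<Rightarrow> (nat \<Rightarrow> 'a::comm_monoid_add vec) \<Rightarrow> nat set \<Rightarrow> 'a vec" where
  "vsum n f J = vec n (\<lambda>i. \<Sum>j\<in>J. f j $ i)"

definition msum :: "nat \<Rightarrow> (nat \<Rightarrow> 'a::comm_monoid_add mat) \<Rightarrow> nat set \<Rightarrow> 'a mat" where
  "msum n f J = mat n n (\<lambda>(i,k). \<Sum>j\<in>J. f j $$ (i,k))"

definition is_subspace :: "nat \<Rightarrow> 'a::field vec set \<Rightarrow> bool" where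
  "is_subspace n V \<longleftrightarrow> V \<subseteq> carrier_vec n \<and> 0\<^sub>v n \<in> V \<and>
     (\<forall>x\<in>V. \<forall>y\<in>V. x + y \<in> V) \<and> (\<forall>c. \<forall>x\<in>V. c \<cdot>\<^sub>v x \<in> V)"

definition center :: "nat \<Rightarrow> 'a::field mat list \<Rightarrow> 'a mat set" where
  "center n As = {X \<in> carrier_mat n n. \<forall>A\<in>set As. transpose_mat (A * X) = A * X}"

definition block_decomps :: "nat \<Rightarrow> 'a::field mat list \<Rightarrow> nat \<Rightarrow> (nat \<Rightarrow> 'a vec set) set" where
  "block_decomps n As t = {V. V \<in> ({..<t} \<rightarrow>\<^sub>E UNIV) \<and>
     (\<forall>j<t. is_subspace n (V j) \<and> V j \<noteq> {0\<^sub>v n}) \<and>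
     (\<forall>x\<in>carrier_vec n. \<exists>!f. f \<in> Pi\<^sub>E {..<t} V \<and> x = vsum n f {..<t}) \<and>
     (\<forall>A\<in>set As. \<forall>j<t. \<forall>l<t. j \<noteq> l \<longrightarrow>
        (\<forall>x\<in>V j. \<forall>y\<in>V l. x \<bullet> (A *\<^sub>v y) = 0))}"

definition dproj :: "nat \<Rightarrow> (nat \<Rightarrow> 'a::field vec set) \<Rightarrow> nat \<Rightarrow> nat \<Rightarrow> 'a vec \<Rightarrow> 'a vec" where
  "dproj n V t j x = (THE f. f \<in> Pi\<^sub>E {..<t} V \<and> x = vsum n f {..<t}) j"

definition proj_mat :: "nat \<Rightarrow> (nat \<Rightarrow> 'a::field vec set) \<Rightarrow> nat \<Rightarrow> nat \<Rightarrow> 'a mat" where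
  "proj_mat n V t j = mat n n (\<lambda>(i,k). dproj n V t j (unit_vec n k) $ i)"

definition proj_tuple :: "nat \<Rightarrow> nat \<Rightarrow> (nat \<Rightarrow> 'a::field vec set) \<Rightarrow> (nat \<Rightarrow> 'a mat)" where
  "proj_tuple n t V = (\<lambda>j\<in>{..<t}. proj_mat n V t j)"

definition orth_idems :: "nat \<Rightarrow> 'a::field mat list \<Rightarrow> nat \<Rightarrow> (nat \<Rightarrow> 'a mat) set" where
  "orth_idems n As t = {e. e \<in> ({..<t} \<rightarrow>\<^sub>E center n As) \<and>
     (\<forall>j<t. e j \<noteq> 0\<^sub>m n n \<and> e j * e j = e j) \<and>
     (\<forall>j<t. \<forall>l<t. j \<noteq> l \<longrightarrow> e j * e l = 0\<^sub>m n n) \<and>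
     msum n e {..<t} = 1\<^sub>m n}"

end

theory Submission
  imports Defs "Jordan_Normal_Form.Matrix_Kernel"
begin

lemma vsum_carrier[simp]: "vsum n f J \<in> carrier_vec n"
  unfolding vsum_def by auto
lemma vsum_dim[simp]: "dim_vec (vsum n f J) = n"
  unfolding vsum_def by auto
lemma vsum_index[simp]: "i < n \<Longrightarrow> vsum n f J $ i = (\<Sum>j\<in>J. f j $ i)"
  unfolding vsum_def by auto
lemma msum_carrier[simp]: "msum n f J \<in> carrier_mat n n"
  unfolding msum_def by auto
lemma msum_dim[simp]: "dim_row (msum n f J) = n" "dim_col (msum n f J) = n"
  unfolding msum_def by auto
lemma msum_index[simp]: "i < n \<Longrightarrow> k < n \<Longrightarrow> msum n f J $$ (i,k) = (\<Sum>j\<in>J. f j $$ (i,k))"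
  unfolding msum_def by auto

lemma mat_col_unit: fixes A :: "'a::field mat" assumes "A \<in> carrier_mat n n" "i < n" "k < n"
  shows "(A *\<^sub>v unit_vec n k) $ i = A $$ (i,k)"
proof -
  have d: "dim_row A = n" "dim_col A = n" using assms(1) by auto
  have "(A *\<^sub>v unit_vec n k) $ i = row A i \<bullet> unit_vec n k" using d assms(2) by simp
  also have "\<dots> = row A i $ k" by (rule scalar_prod_right_unit[OF assms(3)])
  also have "\<dots> = A $$ (i,k)" using d assms by simp
  finally show ?thesis .
qed

lemma mult_vec_index: "M \<in> carrier_mat nr n \<Longrightarrow> x \<in> carrier_vec n \<Longrightarrow> i < nr \<Longrightarrow>
   (M *\<^sub>v x) $ i = (\<Sum>k<n. M $$ (i,k) * x $ k)"
  unfolding carrier_mat_def carrier_vec_def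
  by (simp add: scalar_prod_def lessThan_atLeast0)

lemma mat_eqI_vec: fixes A B :: "'a::field mat"
  assumes A: "A \<in> carrier_mat n n" and B: "B \<in> carrier_mat n n"
    and eq: "\<And>x. x \<in> carrier_vec n \<Longrightarrow> A *\<^sub>v x = B *\<^sub>v x"
  shows "A = B"
proof (rule eq_matI)
  fix i k assume "i < dim_row B" "k < dim_col B"
  hence ik: "i < n" "k < n" using B by auto
  have "A $$ (i,k) = (A *\<^sub>v unit_vec n k) $ i" using mat_col_unit[OF A ik] by simp
  also have "\<dots> = (B *\<^sub>v unit_vec n k) $ i" using eq[of "unit_vec n k"] by simp
  also have "\<dots> = B $$ (i,k)" using mat_col_unit[OF B ik] by simp
  finally show "A $$ (i,k) = B $$ (i,k)" .
qed (use A B in auto)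

lemma msum_mult_vec: fixes f :: "nat \<Rightarrow> 'a::field mat"
  assumes f: "\<And>j. j \<in> J \<Longrightarrow> f j \<in> carrier_mat n n" and x: "x \<in> carrier_vec n"
  shows "msum n f J *\<^sub>v x = vsum n (\<lambda>j. f j *\<^sub>v x) J"
proof (rule eq_vecI)
  fix i assume "i < dim_vec (vsum n (\<lambda>j. f j *\<^sub>v x) J)"
  hence i: "i < n" by simp
  have "(msum n f J *\<^sub>v x) $ i = (\<Sum>k<n. (\<Sum>j\<in>J. f j $$ (i,k)) * x $ k)"
    using i x by (simp add: scalar_prod_def lessThan_atLeast0)
  also have "\<dots> = (\<Sum>j\<in>J. \<Sum>k<n. f j $$ (i,k) * x $ k)"
    by (simp add: sum_distrib_right sum.swap[of _ J])
  also have "\<dots> = vsum n (\<lambda>j. f j *\<^sub>v x) J $ i"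
    using i by (simp add: mult_vec_index[OF f x i])
  finally show "(msum n f J *\<^sub>v x) $ i = vsum n (\<lambda>j. f j *\<^sub>v x) J $ i" .
qed (use x in auto)

lemma mult_vsum: fixes M :: "'a::field mat"
  assumes M: "M \<in> carrier_mat n n" and g: "\<And>j. j \<in> J \<Longrightarrow> g j \<in> carrier_vec n"
  shows "M *\<^sub>v vsum n g J = vsum n (\<lambda>j. M *\<^sub>v g j) J"
proof (rule eq_vecI)
  fix i assume "i < dim_vec (vsum n (\<lambda>j. M *\<^sub>v g j) J)"
  hence i: "i < n" by simp
  have "(M *\<^sub>v vsum n g J) $ i = (\<Sum>k<n. M $$ (i,k) * (\<Sum>j\<in>J. g j $ k))"
    using i M by (simp add: scalar_prod_def lessThan_atLeast0)
  also have "\<dots> = (\<Sum>j\<in>J. \<Sum>k<n. M $$ (i,k) * g j $ k)"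
    by (simp add: sum_distrib_left sum.swap[of _ J])
  also have "\<dots> = vsum n (\<lambda>j. M *\<^sub>v g j) J $ i"
    using i by (simp add: mult_vec_index[OF M g i])
  finally show "(M *\<^sub>v vsum n g J) $ i = vsum n (\<lambda>j. M *\<^sub>v g j) J $ i" .
qed (use M in auto)

lemma vsum_scalar: fixes g :: "nat \<Rightarrow> 'a::field vec"
  assumes w: "w \<in> carrier_vec n"
  shows "vsum n g J \<bullet> w = (\<Sum>j\<in>J. g j \<bullet> w)"
proof -
  have "vsum n g J \<bullet> w = (\<Sum>i<n. (\<Sum>j\<in>J. g j $ i) * w $ i)"
    using w by (simp add: scalar_prod_def lessThan_atLeast0)
  also have "\<dots> = (\<Sum>j\<in>J. \<Sum>i<n. g j $ i * w $ i)"
    by (simp add: sum_distrib_right sum.swap[of _ J])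
  also have "\<dots> = (\<Sum>j\<in>J. g j \<bullet> w)"
    using w by (simp add: scalar_prod_def lessThan_atLeast0)
  finally show ?thesis .
qed

lemma vsum_cong: "(\<And>j. j \<in> J \<Longrightarrow> f j = g j) \<Longrightarrow> vsum n f J = vsum n g J"
  unfolding vsum_def by auto

lemma vsum_empty[simp]: "vsum n f {} = 0\<^sub>v n"
  by (rule eq_vecI, auto)

lemma vsum_insert: assumes "finite K" "k \<notin> K" "f k \<in> carrier_vec n"
  shows "vsum n f (insert k K) = f k + vsum n f K"
  by (rule eq_vecI, insert assms, auto)

lemma subspaceD: assumes "is_subspace n W"
  shows "W \<subseteq> carrier_vec n" "0\<^sub>v n \<in> W" "\<And>x y. x \<in> W \<Longrightarrow> y \<in> W \<Longrightarrow> x + y \<in> W"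
    "\<And>c x. x \<in> W \<Longrightarrow> c \<cdot>\<^sub>v x \<in> W"
  using assms unfolding is_subspace_def by auto

lemma subspace_vsum: assumes W: "is_subspace n W" and K: "finite K"
  shows "(\<And>k. k \<in> K \<Longrightarrow> w k \<in> W) \<Longrightarrow> vsum n w K \<in> W"
  using K
proof (induction K rule: finite_induct)
  case empty
  then show ?case using subspaceD(2)[OF W] by simp
next
  case (insert k K)
  have "w k \<in> carrier_vec n" using insert(4) subspaceD(1)[OF W] by auto
  then have "vsum n w (insert k K) = w k + vsum n w K" using vsum_insert insert(1,2) by blast
  then show ?case using subspaceD(3)[OF W] insert by auto
qed

lemma BD_D: assumes "V \<in> block_decomps n As t"
  shows "V \<in> {..<t} \<rightarrow>\<^sub>E UNIV" "\<And>j. j < t \<Longrightarrow> is_subspace n (V j)"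
    "\<And>j. j < t \<Longrightarrow> V j \<noteq> {0\<^sub>v n}"
    "\<And>x. x \<in> carrier_vec n \<Longrightarrow> \<exists>!f. f \<in> Pi\<^sub>E {..<t} V \<and> x = vsum n f {..<t}"
    "\<And>A j l x y. A \<in> set As \<Longrightarrow> j < t \<Longrightarrow> l < t \<Longrightarrow> j \<noteq> l \<Longrightarrow> x \<in> V j \<Longrightarrow> y \<in> V l
       \<Longrightarrow> x \<bullet> (A *\<^sub>v y) = 0"
proof -
  have "V \<in> {..<t} \<rightarrow>\<^sub>E UNIV \<and>
     (\<forall>j<t. is_subspace n (V j) \<and> V j \<noteq> {0\<^sub>v n}) \<and>
     (\<forall>x\<in>carrier_vec n. \<exists>!f. f \<in> Pi\<^sub>E {..<t} V \<and> x = vsum n f {..<t}) \<and>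
     (\<forall>A\<in>set As. \<forall>j<t. \<forall>l<t. j \<noteq> l \<longrightarrow>
        (\<forall>x\<in>V j. \<forall>y\<in>V l. x \<bullet> (A *\<^sub>v y) = 0))"
    using assms unfolding block_decomps_def mem_Collect_eq .
  note h = this[THEN conjunct1] this[THEN conjunct2, THEN conjunct1]
     this[THEN conjunct2, THEN conjunct2, THEN conjunct1] this[THEN conjunct2, THEN conjunct2, THEN conjunct2]
  show "V \<in> {..<t} \<rightarrow>\<^sub>E UNIV" by (rule h(1))
  show "\<And>j. j < t \<Longrightarrow> is_subspace n (V j)" using h(2) by simp
  show "\<And>j. j < t \<Longrightarrow> V j \<noteq> {0\<^sub>v n}" using h(2) by simp
  show "\<And>x. x \<in> carrier_vec n \<Longrightarrow> \<exists>!f. f \<in> Pi\<^sub>E {..<t} V \<and> x = vsum n f {..<t}"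
    using h(3) by (rule bspec)
  show "\<And>A j l x y. A \<in> set As \<Longrightarrow> j < t \<Longrightarrow> l < t \<Longrightarrow> j \<noteq> l \<Longrightarrow> x \<in> V j \<Longrightarrow> y \<in> V l
       \<Longrightarrow> x \<bullet> (A *\<^sub>v y) = 0" using h(4) by blast
qed

definition dF :: "nat \<Rightarrow> (nat \<Rightarrow> 'a::field vec set) \<Rightarrow> nat \<Rightarrow> 'a vec \<Rightarrow> nat \<Rightarrow> 'a vec" where
  "dF n V t x = (THE f. f \<in> Pi\<^sub>E {..<t} V \<and> x = vsum n f {..<t})"

lemma dproj_dF: "dproj n V t j x = dF n V t x j"
  unfolding dproj_def dF_def ..

lemma BD_F: assumes "V \<in> block_decomps n As t" "x \<in> carrier_vec n"
  shows "dF n V t x \<in> Pi\<^sub>E {..<t} V" "x = vsum n (dF n V t x) {..<t}"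
  using theI'[OF BD_D(4)[OF assms]] unfolding dF_def by auto

lemma BD_F_unique: assumes "V \<in> block_decomps n As t" "x \<in> carrier_vec n"
  and "g \<in> Pi\<^sub>E {..<t} V" "x = vsum n g {..<t}"
  shows "dF n V t x = g"
  unfolding dF_def by (rule the1_equality[OF BD_D(4)[OF assms(1,2)]], insert assms, auto)

lemma BD_carrier: assumes "V \<in> block_decomps n As t" "j < t" "v \<in> V j"
  shows "v \<in> carrier_vec n"
  using subspaceD(1)[OF BD_D(2)[OF assms(1,2)]] assms(3) by auto

lemma proj_mat_carrier[simp]: "proj_mat n V t j \<in> carrier_mat n n"
  unfolding proj_mat_def by auto

lemma proj_mat_dim[simp]: "dim_row (proj_mat n V t j) = n" "dim_col (proj_mat n V t j) = n"
  unfolding proj_mat_def by auto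

lemma proj_mat_index: "i < n \<Longrightarrow> k < n \<Longrightarrow> proj_mat n V t j $$ (i,k) = dF n V t (unit_vec n k) j $ i"
  unfolding proj_mat_def dproj_dF by auto

lemma BD_proj: fixes V :: "nat \<Rightarrow> 'a::field vec set"
  assumes BD: "V \<in> block_decomps n As t" and x: "x \<in> carrier_vec n"
  shows "\<And>j. j < t \<Longrightarrow> dproj n V t j x = proj_mat n V t j *\<^sub>v x"
    "\<And>j. j < t \<Longrightarrow> proj_mat n V t j *\<^sub>v x \<in> V j"
    "vsum n (\<lambda>l. proj_mat n V t l *\<^sub>v x) {..<t} = x"
proof -
  let ?M = "proj_mat n V t"
  let ?u = "\<lambda>k. dF n V t (unit_vec n k)"
  have uV: "\<And>k l. l < t \<Longrightarrow> ?u k l \<in> V l"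
    by (rule PiE_mem[OF BD_F(1)[OF BD unit_vec_carrier]], simp)
  have uC: "\<And>k l. l < t \<Longrightarrow> ?u k l \<in> carrier_vec n" using uV BD_carrier[OF BD] by blast
  have exp: "?M l *\<^sub>v x = vsum n (\<lambda>k. x $ k \<cdot>\<^sub>v ?u k l) {..<n}" if l: "l < t" for l
  proof (rule eq_vecI)
    fix i assume "i < dim_vec (vsum n (\<lambda>k. x $ k \<cdot>\<^sub>v ?u k l) {..<n})"
    hence i: "i < n" by simp
    have "(?M l *\<^sub>v x) $ i = (\<Sum>k<n. ?M l $$ (i,k) * x $ k)"
      by (rule mult_vec_index[OF proj_mat_carrier x i])
    also have "\<dots> = (\<Sum>k<n. (x $ k \<cdot>\<^sub>v ?u k l) $ i)"
    proof (intro sum.cong refl)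
      fix k assume k: "k \<in> {..<n}"
      have d: "dim_vec (?u k l) = n" using carrier_vecD[OF uC[OF l]] .
      have 1: "?M l $$ (i,k) = ?u k l $ i" using proj_mat_index[OF i] k by simp
      have 2: "(x $ k \<cdot>\<^sub>v ?u k l) $ i = x $ k * ?u k l $ i" using d i by simp
      show "?M l $$ (i,k) * x $ k = (x $ k \<cdot>\<^sub>v ?u k l) $ i"
        unfolding 1 2 by (rule mult.commute)
    qed
    finally show "(?M l *\<^sub>v x) $ i = vsum n (\<lambda>k. x $ k \<cdot>\<^sub>v ?u k l) {..<n} $ i" using i by simp
  qed (simp)
  show MV: "\<And>j. j < t \<Longrightarrow> ?M j *\<^sub>v x \<in> V j"
  proof -
    fix j assume j: "j < t"
    show "?M j *\<^sub>v x \<in> V j" unfolding exp[OF j]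
      by (rule subspace_vsum[OF BD_D(2)[OF BD j]], auto intro!: subspaceD(4)[OF BD_D(2)[OF BD j]] uV j)
  qed
  show S: "vsum n (\<lambda>l. ?M l *\<^sub>v x) {..<t} = x"
  proof (rule eq_vecI)
    fix i assume "i < dim_vec x"
    hence i: "i < n" using x by auto
    have "vsum n (\<lambda>l. ?M l *\<^sub>v x) {..<t} $ i = (\<Sum>l<t. \<Sum>k<n. ?M l $$ (i,k) * x $ k)"
      using i by (simp add: mult_vec_index[OF proj_mat_carrier x i])
    also have "\<dots> = (\<Sum>l<t. \<Sum>k<n. x $ k * ?u k l $ i)"
      using i by (intro sum.cong refl, simp add: proj_mat_index mult.commute)
    also have "\<dots> = (\<Sum>k<n. x $ k * (\<Sum>l<t. ?u k l $ i))"
      by (simp add: sum.swap[of _ "{..<t}"] sum_distrib_left)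
    also have "\<dots> = (\<Sum>k<n. x $ k * (unit_vec n k $ i))"
    proof (intro sum.cong refl)
      fix k assume "k \<in> {..<n}"
      have "unit_vec n k $ i = vsum n (?u k) {..<t} $ i"
        using BD_F(2)[OF BD unit_vec_carrier, of k] by simp
      thus "x $ k * (\<Sum>l<t. ?u k l $ i) = x $ k * (unit_vec n k $ i)" using i by simp
    qed
    also have "\<dots> = (\<Sum>k<n. if k = i then x $ i else 0)"
      using i by (intro sum.cong refl, auto)
    also have "\<dots> = x $ i" using i by simp
    finally show "vsum n (\<lambda>l. ?M l *\<^sub>v x) {..<t} $ i = x $ i" .
  qed (use x in auto)
  fix j assume j: "j < t"
  let ?g = "\<lambda>l\<in>{..<t}. ?M l *\<^sub>v x"
  have "?g \<in> Pi\<^sub>E {..<t} V" using MV by auto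
  moreover have "x = vsum n ?g {..<t}" using S by (metis (no_types, lifting) restrict_apply' vsum_cong)
  ultimately have "dF n V t x = ?g" by (rule BD_F_unique[OF BD x])
  thus "dproj n V t j x = ?M j *\<^sub>v x" using j by (simp add: dproj_dF)
qed

lemma proj_mat_mult_carrier[simp]: "v \<in> carrier_vec n \<Longrightarrow> proj_mat n V t j *\<^sub>v v \<in> carrier_vec n"
  by (rule mult_mat_vec_carrier[OF proj_mat_carrier])

lemma BD_single: fixes V :: "nat \<Rightarrow> 'a::field vec set"
  assumes BD: "V \<in> block_decomps n As t" and j: "j < t" and v: "v \<in> V j" and l: "l < t"
  shows "proj_mat n V t l *\<^sub>v v = (if l = j then v else 0\<^sub>v n)"
proof -
  have vc: "v \<in> carrier_vec n" by (rule BD_carrier[OF BD j v])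
  let ?g = "\<lambda>l\<in>{..<t}. if l = j then v else 0\<^sub>v n"
  have g: "?g \<in> Pi\<^sub>E {..<t} V" using v subspaceD(2)[OF BD_D(2)[OF BD]] by auto
  have "vsum n ?g {..<t} = v"
  proof (rule eq_vecI)
    fix i assume "i < dim_vec v"
    hence i: "i < n" using vc by simp
    have "vsum n ?g {..<t} $ i = (\<Sum>l\<in>{..<t}. if l = j then v $ i else 0)"
      using i by (intro trans[OF vsum_index[OF i]] sum.cong refl, auto)
    also have "\<dots> = v $ i" using j by simp
    finally show "vsum n ?g {..<t} $ i = v $ i" .
  qed (use vc in simp)
  hence "dF n V t v = ?g" using BD_F_unique[OF BD vc g] by simp
  thus ?thesis using BD_proj(1)[OF BD vc l] l by (simp add: dproj_dF)
qed

lemma sym_swap: fixes A :: "'a::field mat"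
  assumes A: "A \<in> carrier_mat n n" and sym: "transpose_mat A = A"
    and u: "u \<in> carrier_vec n" and w: "w \<in> carrier_vec n"
  shows "u \<bullet> (A *\<^sub>v w) = w \<bullet> (A *\<^sub>v u)"
proof -
  have "u \<bullet> (A *\<^sub>v w) = (transpose_mat A *\<^sub>v u) \<bullet> w"
    by (rule transpose_vec_mult_scalar[OF A w u, symmetric])
  also have "\<dots> = (A *\<^sub>v u) \<bullet> w" using sym by simp
  also have "\<dots> = w \<bullet> (A *\<^sub>v u)" by (rule comm_scalar_prod[OF _ w], use A u in simp)
  finally show ?thesis .
qed

lemma entry_form: fixes A M :: "'a::field mat"
  assumes A: "A \<in> carrier_mat n n" and M: "M \<in> carrier_mat n n" and a: "a < n" and b: "b < n"
  shows "(A * M) $$ (a,b) = unit_vec n a \<bullet> (A *\<^sub>v (M *\<^sub>v unit_vec n b))"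
proof -
  have AM: "A * M \<in> carrier_mat n n" using A M by simp
  have "(A * M) $$ (a,b) = ((A * M) *\<^sub>v unit_vec n b) $ a" using mat_col_unit[OF AM a b] by simp
  also have "\<dots> = unit_vec n a \<bullet> ((A * M) *\<^sub>v unit_vec n b)"
    by (rule scalar_prod_left_unit[symmetric], use AM in simp, rule a)
  also have "(A * M) *\<^sub>v unit_vec n b = A *\<^sub>v (M *\<^sub>v unit_vec n b)"
    using A M by simp
  finally show ?thesis .
qed

lemma sym_entries: fixes B :: "'a::field mat"
  assumes B: "B \<in> carrier_mat n n" and e: "\<And>a b. a < n \<Longrightarrow> b < n \<Longrightarrow> B $$ (a,b) = B $$ (b,a)"
  shows "transpose_mat B = B"
  by (rule eq_matI, use B e in auto)

lemma BD_center: fixes V :: "nat \<Rightarrow> 'a::field vec set"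
  assumes BD: "V \<in> block_decomps n As t" and AA: "A \<in> set As"
    and A: "A \<in> carrier_mat n n" and sym: "transpose_mat A = A" and j: "j < t"
  shows "transpose_mat (A * proj_mat n V t j) = A * proj_mat n V t j"
proof -
  let ?M = "proj_mat n V t"
  have half: "x \<bullet> (A *\<^sub>v (?M j *\<^sub>v y)) = (?M j *\<^sub>v x) \<bullet> (A *\<^sub>v (?M j *\<^sub>v y))"
    if x: "x \<in> carrier_vec n" and y: "y \<in> carrier_vec n" for x y
  proof -
    let ?w = "A *\<^sub>v (?M j *\<^sub>v y)"
    have w: "?w \<in> carrier_vec n" by (intro mult_mat_vec_carrier[OF A] mult_mat_vec_carrier[OF proj_mat_carrier] y)
    have "x \<bullet> ?w = vsum n (\<lambda>l. ?M l *\<^sub>v x) {..<t} \<bullet> ?w" using BD_proj(3)[OF BD x] by simp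
    also have "\<dots> = (\<Sum>l\<in>{..<t}. (?M l *\<^sub>v x) \<bullet> ?w)" by (rule vsum_scalar[OF w])
    also have "\<dots> = (\<Sum>l\<in>{..<t}. if l = j then (?M j *\<^sub>v x) \<bullet> ?w else 0)"
    proof (rule sum.cong[OF refl])
      fix l assume l: "l \<in> {..<t}"
      show "(?M l *\<^sub>v x) \<bullet> ?w = (if l = j then (?M j *\<^sub>v x) \<bullet> ?w else 0)"
      proof (cases "l = j")
        case False
        have "(?M l *\<^sub>v x) \<bullet> ?w = 0"
          by (rule BD_D(5)[OF BD AA _ j False], use l in simp,
              rule BD_proj(2)[OF BD x], use l in simp, rule BD_proj(2)[OF BD y j])
        thus ?thesis using False by simp
      qed simp
    qed
    also have "\<dots> = (?M j *\<^sub>v x) \<bullet> ?w" using j by simp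
    finally show ?thesis .
  qed
  have key: "x \<bullet> (A *\<^sub>v (?M j *\<^sub>v y)) = (?M j *\<^sub>v x) \<bullet> (A *\<^sub>v y)"
    if x: "x \<in> carrier_vec n" and y: "y \<in> carrier_vec n" for x y
  proof -
    have Mx: "?M j *\<^sub>v x \<in> carrier_vec n" "?M j *\<^sub>v y \<in> carrier_vec n"
      by (intro mult_mat_vec_carrier[OF proj_mat_carrier] x y)+
    have "(?M j *\<^sub>v x) \<bullet> (A *\<^sub>v y) = y \<bullet> (A *\<^sub>v (?M j *\<^sub>v x))" by (rule sym_swap[OF A sym Mx(1) y])
    also have "\<dots> = (?M j *\<^sub>v y) \<bullet> (A *\<^sub>v (?M j *\<^sub>v x))" by (rule half[OF y x])
    also have "\<dots> = (?M j *\<^sub>v x) \<bullet> (A *\<^sub>v (?M j *\<^sub>v y))" by (rule sym_swap[OF A sym Mx(2) Mx(1)])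
    also have "\<dots> = x \<bullet> (A *\<^sub>v (?M j *\<^sub>v y))" by (rule half[OF x y, symmetric])
    finally show ?thesis by simp
  qed
  show ?thesis
  proof (rule sym_entries)
    show "A * ?M j \<in> carrier_mat n n" using A by simp
    fix a b assume a: "a < n" and b: "b < n"
    have "(A * ?M j) $$ (a,b) = unit_vec n a \<bullet> (A *\<^sub>v (?M j *\<^sub>v unit_vec n b))"
      by (rule entry_form[OF A proj_mat_carrier a b])
    also have "\<dots> = (?M j *\<^sub>v unit_vec n a) \<bullet> (A *\<^sub>v unit_vec n b)" by (rule key, auto)
    also have "\<dots> = unit_vec n b \<bullet> (A *\<^sub>v (?M j *\<^sub>v unit_vec n a))"
      by (rule sym_swap[OF A sym], auto)
    also have "\<dots> = (A * ?M j) $$ (b,a)"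
      by (rule entry_form[OF A proj_mat_carrier b a, symmetric])
    finally show "(A * ?M j) $$ (a,b) = (A * ?M j) $$ (b,a)" .
  qed
qed

lemma zero_mat_mult_vec: "v \<in> carrier_vec n \<Longrightarrow> (0\<^sub>m n n :: 'a::field mat) *\<^sub>v v = 0\<^sub>v n"
  by (rule eq_vecI, auto simp: scalar_prod_def)

lemma BD_idems: fixes V :: "nat \<Rightarrow> 'a::field vec set"
  assumes BD: "V \<in> block_decomps n As t"
    and dims: "\<forall>A\<in>set As. A \<in> carrier_mat n n"
    and sym: "\<forall>A\<in>set As. transpose_mat A = A"
  shows "proj_tuple n t V \<in> orth_idems n As t"
proof -
  let ?M = "proj_mat n V t"
  let ?e = "proj_tuple n t V"
  have e: "\<And>j. j < t \<Longrightarrow> ?e j = ?M j" unfolding proj_tuple_def by simp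
  have cen: "?M j \<in> center n As" if j: "j < t" for j
    unfolding center_def using BD_center[OF BD _ _ _ j] dims sym by auto
  have PiE: "?e \<in> {..<t} \<rightarrow>\<^sub>E center n As" using cen unfolding proj_tuple_def by auto
  have idem: "?M j * ?M j = ?M j" if j: "j < t" for j
  proof (rule mat_eqI_vec[of _ n])
    fix x :: "'a vec" assume x: "x \<in> carrier_vec n"
    have "(?M j * ?M j) *\<^sub>v x = ?M j *\<^sub>v (?M j *\<^sub>v x)" by (rule assoc_mult_mat_vec[OF proj_mat_carrier proj_mat_carrier x])
    also have "\<dots> = ?M j *\<^sub>v x" using BD_single[OF BD j BD_proj(2)[OF BD x j] j] by simp
    finally show "(?M j * ?M j) *\<^sub>v x = ?M j *\<^sub>v x" .
  qed auto
  have orth: "?M j * ?M l = 0\<^sub>m n n" if j: "j < t" and l: "l < t" and jl: "j \<noteq> l" for j l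
  proof (rule mat_eqI_vec[of _ n])
    fix x :: "'a vec" assume x: "x \<in> carrier_vec n"
    have "(?M j * ?M l) *\<^sub>v x = ?M j *\<^sub>v (?M l *\<^sub>v x)" by (rule assoc_mult_mat_vec[OF proj_mat_carrier proj_mat_carrier x])
    also have "\<dots> = 0\<^sub>v n" using BD_single[OF BD l BD_proj(2)[OF BD x l] j] jl by simp
    finally show "(?M j * ?M l) *\<^sub>v x = 0\<^sub>m n n *\<^sub>v x" using zero_mat_mult_vec[OF x] by simp
  qed auto
  have nz: "?M j \<noteq> 0\<^sub>m n n" if j: "j < t" for j
  proof
    assume M0: "?M j = 0\<^sub>m n n"
    have sub: "is_subspace n (V j)" by (rule BD_D(2)[OF BD j])
    from BD_D(3)[OF BD j] subspaceD(2)[OF sub] obtain v where v: "v \<in> V j" "v \<noteq> 0\<^sub>v n" by blast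
    have vc: "v \<in> carrier_vec n" using BD_carrier[OF BD j v(1)] .
    have "?M j *\<^sub>v v = v" using BD_single[OF BD j v(1) j] by simp
    moreover have "?M j *\<^sub>v v = 0\<^sub>v n" using M0 zero_mat_mult_vec[OF vc] by simp
    ultimately show False using v(2) by simp
  qed
  have sum: "msum n ?e {..<t} = 1\<^sub>m n"
  proof (rule mat_eqI_vec[of _ n])
    fix x :: "'a vec" assume x: "x \<in> carrier_vec n"
    have "msum n ?e {..<t} *\<^sub>v x = vsum n (\<lambda>j. ?e j *\<^sub>v x) {..<t}"
      by (rule msum_mult_vec[OF _ x], simp add: e)
    also have "\<dots> = vsum n (\<lambda>j. ?M j *\<^sub>v x) {..<t}" by (rule vsum_cong, simp add: e)
    also have "\<dots> = x" by (rule BD_proj(3)[OF BD x])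
    finally show "msum n ?e {..<t} *\<^sub>v x = 1\<^sub>m n *\<^sub>v x" using x by simp
  qed auto
  show ?thesis unfolding orth_idems_def
    using PiE idem orth nz sum e by auto
qed

definition img :: "nat \<Rightarrow> nat \<Rightarrow> (nat \<Rightarrow> 'a::field mat) \<Rightarrow> nat \<Rightarrow> 'a vec set" where
  "img n t e = (\<lambda>j\<in>{..<t}. (\<lambda>x. e j *\<^sub>v x) ` carrier_vec n)"

lemma OI_D: assumes "e \<in> orth_idems n As t"
  shows "e \<in> {..<t} \<rightarrow>\<^sub>E center n As"
    "\<And>j. j < t \<Longrightarrow> e j \<noteq> 0\<^sub>m n n" "\<And>j. j < t \<Longrightarrow> e j * e j = e j"
    "\<And>j l. j < t \<Longrightarrow> l < t \<Longrightarrow> j \<noteq> l \<Longrightarrow> e j * e l = 0\<^sub>m n n"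
    "msum n e {..<t} = 1\<^sub>m n"
proof -
  have h: "e \<in> ({..<t} \<rightarrow>\<^sub>E center n As) \<and>
     (\<forall>j<t. e j \<noteq> 0\<^sub>m n n \<and> e j * e j = e j) \<and>
     (\<forall>j<t. \<forall>l<t. j \<noteq> l \<longrightarrow> e j * e l = 0\<^sub>m n n) \<and>
     msum n e {..<t} = 1\<^sub>m n" using assms unfolding orth_idems_def mem_Collect_eq .
  thus "e \<in> {..<t} \<rightarrow>\<^sub>E center n As"
    "\<And>j. j < t \<Longrightarrow> e j \<noteq> 0\<^sub>m n n" "\<And>j. j < t \<Longrightarrow> e j * e j = e j"
    "\<And>j l. j < t \<Longrightarrow> l < t \<Longrightarrow> j \<noteq> l \<Longrightarrow> e j * e l = 0\<^sub>m n n"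
    "msum n e {..<t} = 1\<^sub>m n" by blast+
qed

lemma OI_carrier: assumes "e \<in> orth_idems n As t" "j < t"
  shows "e j \<in> carrier_mat n n"
  using OI_D(1)[OF assms(1)] assms(2) unfolding center_def by auto

lemma OI_center: assumes "e \<in> orth_idems n As t" "j < t" "A \<in> set As"
  shows "transpose_mat (A * e j) = A * e j"
  using OI_D(1)[OF assms(1)] assms(2,3) unfolding center_def by auto

lemma OI_vec: fixes e :: "nat \<Rightarrow> 'a::field mat"
  assumes OI: "e \<in> orth_idems n As t" and j: "j < t" and l: "l < t" and x: "x \<in> carrier_vec n"
  shows "e j *\<^sub>v (e l *\<^sub>v x) = (if j = l then e l *\<^sub>v x else 0\<^sub>v n)"
proof -
  have c: "e j \<in> carrier_mat n n" "e l \<in> carrier_mat n n" using OI_carrier[OF OI] j l by auto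
  have "e j *\<^sub>v (e l *\<^sub>v x) = (e j * e l) *\<^sub>v x" by (rule assoc_mult_mat_vec[OF c x, symmetric])
  thus ?thesis using OI_D(3,4)[OF OI] j l zero_mat_mult_vec[OF x] by auto
qed

lemma OI_sum: fixes e :: "nat \<Rightarrow> 'a::field mat"
  assumes OI: "e \<in> orth_idems n As t" and x: "x \<in> carrier_vec n"
  shows "vsum n (\<lambda>l. e l *\<^sub>v x) {..<t} = x"
proof -
  have "vsum n (\<lambda>l. e l *\<^sub>v x) {..<t} = msum n e {..<t} *\<^sub>v x"
    by (rule msum_mult_vec[OF _ x, symmetric], use OI_carrier[OF OI] in auto)
  thus ?thesis using OI_D(5)[OF OI] x by simp
qed

lemma img_decomp_unique: fixes e :: "nat \<Rightarrow> 'a::field mat"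
  assumes OI: "e \<in> orth_idems n As t" and x: "x \<in> carrier_vec n"
    and g: "g \<in> Pi\<^sub>E {..<t} (img n t e)" and xg: "x = vsum n g {..<t}"
  shows "g = (\<lambda>l\<in>{..<t}. e l *\<^sub>v x)"
proof
  fix j
  show "g j = (\<lambda>l\<in>{..<t}. e l *\<^sub>v x) j"
  proof (cases "j < t")
    case False
    thus ?thesis using g by (auto simp: PiE_def extensional_def)
  next
    case j: True
    have gl: "\<exists>y\<in>carrier_vec n. g l = e l *\<^sub>v y" if l: "l < t" for l
      using PiE_mem[OF g, of l] l unfolding img_def by auto
    have gc: "g l \<in> carrier_vec n" if l: "l \<in> {..<t}" for l
      using gl[of l] l OI_carrier[OF OI, of l] by auto
    have "e j *\<^sub>v x = vsum n (\<lambda>l. e j *\<^sub>v g l) {..<t}"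
      unfolding xg by (rule mult_vsum[OF OI_carrier[OF OI j] gc])
    also have "\<dots> = vsum n (\<lambda>l. if l = j then g j else 0\<^sub>v n) {..<t}"
    proof (rule vsum_cong)
      fix l assume l: "l \<in> {..<t}"
      then obtain y where y: "y \<in> carrier_vec n" "g l = e l *\<^sub>v y" using gl by auto
      show "e j *\<^sub>v g l = (if l = j then g j else 0\<^sub>v n)"
        using OI_vec[OF OI j _ y(1), of l] l y(2) by auto
    qed
    also have "\<dots> = g j"
    proof (rule eq_vecI)
      fix i assume "i < dim_vec (g j)"
      hence i: "i < n" using gc[of j] j by simp
      have "vsum n (\<lambda>l. if l = j then g j else 0\<^sub>v n) {..<t} $ i = (\<Sum>l\<in>{..<t}. if l = j then g j $ i else 0)"
        using i by (intro trans[OF vsum_index[OF i]] sum.cong refl, auto)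
      also have "\<dots> = g j $ i" using j by simp
      finally show "vsum n (\<lambda>l. if l = j then g j else 0\<^sub>v n) {..<t} $ i = g j $ i" .
    qed (use gc[of j] j in simp)
    finally show ?thesis using j by simp
  qed
qed

lemma img_BD: fixes e :: "nat \<Rightarrow> 'a::field mat"
  assumes OI: "e \<in> orth_idems n As t"
    and dims: "\<forall>A\<in>set As. A \<in> carrier_mat n n"
    and sym: "\<forall>A\<in>set As. transpose_mat A = A"
  shows "img n t e \<in> block_decomps n As t"
proof -
  have imgj: "img n t e j = (\<lambda>x. e j *\<^sub>v x) ` carrier_vec n" if "j < t" for j
    using that unfolding img_def by simp
  have E: "img n t e \<in> {..<t} \<rightarrow>\<^sub>E UNIV" unfolding img_def by auto
  have sub: "is_subspace n (img n t e j)" if j: "j < t" for j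
  proof -
    have c: "e j \<in> carrier_mat n n" by (rule OI_carrier[OF OI j])
    show ?thesis unfolding is_subspace_def imgj[OF j]
    proof (intro conjI ballI allI)
      show "(\<lambda>x. e j *\<^sub>v x) ` carrier_vec n \<subseteq> carrier_vec n" using c by auto
      show "0\<^sub>v n \<in> (\<lambda>x. e j *\<^sub>v x) ` carrier_vec n"
        by (rule image_eqI[of _ _ "0\<^sub>v n"], rule eq_vecI, use c in \<open>auto simp: scalar_prod_def\<close>)
      fix x y assume x: "x \<in> (\<lambda>x. e j *\<^sub>v x) ` carrier_vec n" and y: "y \<in> (\<lambda>x. e j *\<^sub>v x) ` carrier_vec n"
      then obtain u w where u: "u \<in> carrier_vec n" "x = e j *\<^sub>v u" and w: "w \<in> carrier_vec n" "y = e j *\<^sub>v w"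
        by auto
      show "x + y \<in> (\<lambda>x. e j *\<^sub>v x) ` carrier_vec n"
        by (rule image_eqI[of _ _ "u + w"], use u w mult_add_distrib_mat_vec[OF c u(1) w(1)] in auto)
    next
      fix c' x assume x: "x \<in> (\<lambda>x. e j *\<^sub>v x) ` carrier_vec n"
      then obtain u where u: "u \<in> carrier_vec n" "x = e j *\<^sub>v u" by auto
      show "c' \<cdot>\<^sub>v x \<in> (\<lambda>x. e j *\<^sub>v x) ` carrier_vec n"
        by (rule image_eqI[of _ _ "c' \<cdot>\<^sub>v u"], use u mult_mat_vec[OF c u(1)] in auto)
    qed
  qed
  have nz: "img n t e j \<noteq> {0\<^sub>v n}" if j: "j < t" for j
  proof
    assume h: "img n t e j = {0\<^sub>v n}"
    have c: "e j \<in> carrier_mat n n" by (rule OI_carrier[OF OI j])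
    have "e j = 0\<^sub>m n n"
    proof (rule mat_eqI_vec[OF c zero_carrier_mat])
      fix x :: "'a vec" assume x: "x \<in> carrier_vec n"
      have "e j *\<^sub>v x \<in> img n t e j" using imgj[OF j] x by auto
      thus "e j *\<^sub>v x = 0\<^sub>m n n *\<^sub>v x" using h zero_mat_mult_vec[OF x] by auto
    qed
    thus False using OI_D(2)[OF OI j] by simp
  qed
  have dec: "\<exists>!f. f \<in> Pi\<^sub>E {..<t} (img n t e) \<and> x = vsum n f {..<t}" if x: "x \<in> carrier_vec n" for x
  proof
    let ?g = "\<lambda>l\<in>{..<t}. e l *\<^sub>v x"
    show "?g \<in> Pi\<^sub>E {..<t} (img n t e) \<and> x = vsum n ?g {..<t}"
    proof
      show "?g \<in> Pi\<^sub>E {..<t} (img n t e)" using x imgj by auto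
      have "vsum n ?g {..<t} = vsum n (\<lambda>l. e l *\<^sub>v x) {..<t}" by (rule vsum_cong, simp)
      thus "x = vsum n ?g {..<t}" using OI_sum[OF OI x] by simp
    qed
    fix g assume "g \<in> Pi\<^sub>E {..<t} (img n t e) \<and> x = vsum n g {..<t}"
    thus "g = ?g" using img_decomp_unique[OF OI x] by blast
  qed
  have orth: "x \<bullet> (A *\<^sub>v y) = 0"
    if A: "A \<in> set As" and j: "j < t" and l: "l < t" and jl: "j \<noteq> l"
      and x: "x \<in> img n t e j" and y: "y \<in> img n t e l" for A j l x y
  proof -
    obtain u where u: "u \<in> carrier_vec n" "x = e j *\<^sub>v u" using x imgj[OF j] by auto
    obtain w where w: "w \<in> carrier_vec n" "y = e l *\<^sub>v w" using y imgj[OF l] by auto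
    have Ac: "A \<in> carrier_mat n n" using dims A by auto
    have As: "transpose_mat A = A" using sym A by auto
    have E: "e j \<in> carrier_mat n n" "e l \<in> carrier_mat n n" using OI_carrier[OF OI] j l by auto
    have ET: "transpose_mat (e j) \<in> carrier_mat n n" using E by simp
    have yc: "y \<in> carrier_vec n" using w E by simp
    have eq: "transpose_mat (e j) * A = A * e j"
    proof -
      have "transpose_mat (A * e j) = transpose_mat (e j) * transpose_mat A"
        by (rule transpose_mult[OF Ac E(1)])
      thus ?thesis using OI_center[OF OI j A] As by simp
    qed
    have "x \<bullet> (A *\<^sub>v y) = (transpose_mat (transpose_mat (e j)) *\<^sub>v u) \<bullet> (A *\<^sub>v y)" using u by simp
    also have "\<dots> = u \<bullet> (transpose_mat (e j) *\<^sub>v (A *\<^sub>v y))"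
      by (rule transpose_vec_mult_scalar[OF ET _ u(1)], use Ac yc in simp)
    also have "transpose_mat (e j) *\<^sub>v (A *\<^sub>v y) = (transpose_mat (e j) * A) *\<^sub>v y"
      by (rule assoc_mult_mat_vec[OF ET Ac yc, symmetric])
    also have "\<dots> = A *\<^sub>v (e j *\<^sub>v y)" unfolding eq by (rule assoc_mult_mat_vec[OF Ac E(1) yc])
    also have "e j *\<^sub>v y = 0\<^sub>v n" using OI_vec[OF OI j l w(1)] w(2) jl by simp
    also have "A *\<^sub>v 0\<^sub>v n = 0\<^sub>v n" by (rule eq_vecI, use Ac in \<open>auto simp: scalar_prod_def\<close>)
    finally show ?thesis using u by simp
  qed
  show ?thesis unfolding block_decomps_def mem_Collect_eq
  proof (intro conjI)
    show "img n t e \<in> {..<t} \<rightarrow>\<^sub>E UNIV" by (rule E)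
    show "\<forall>j<t. is_subspace n (img n t e j) \<and> img n t e j \<noteq> {0\<^sub>v n}" using sub nz by simp
    show "\<forall>x\<in>carrier_vec n. \<exists>!f. f \<in> Pi\<^sub>E {..<t} (img n t e) \<and> x = vsum n f {..<t}"
      by (intro ballI dec)
    show "\<forall>A\<in>set As. \<forall>j<t. \<forall>l<t. j \<noteq> l \<longrightarrow> (\<forall>x\<in>img n t e j. \<forall>y\<in>img n t e l. x \<bullet> (A *\<^sub>v y) = 0)"
      using orth by blast
  qed
qed

lemma proj_img: fixes e :: "nat \<Rightarrow> 'a::field mat"
  assumes OI: "e \<in> orth_idems n As t"
    and dims: "\<forall>A\<in>set As. A \<in> carrier_mat n n"
    and sym: "\<forall>A\<in>set As. transpose_mat A = A"
  shows "proj_tuple n t (img n t e) = e"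
proof
  fix j
  show "proj_tuple n t (img n t e) j = e j"
  proof (cases "j < t")
    case False
    thus ?thesis using OI_D(1)[OF OI] unfolding proj_tuple_def by (auto simp: PiE_def extensional_def)
  next
    case j: True
    have BD: "img n t e \<in> block_decomps n As t" by (rule img_BD[OF OI dims sym])
    have c: "e j \<in> carrier_mat n n" by (rule OI_carrier[OF OI j])
    have "proj_mat n (img n t e) t j = e j"
    proof (rule eq_matI)
      fix i k assume "i < dim_row (e j)" "k < dim_col (e j)"
      hence ik: "i < n" "k < n" using c by auto
      have "dF n (img n t e) t (unit_vec n k) = (\<lambda>l\<in>{..<t}. e l *\<^sub>v unit_vec n k)"
        by (rule img_decomp_unique[OF OI unit_vec_carrier BD_F[OF BD unit_vec_carrier]])
      hence "proj_mat n (img n t e) t j $$ (i,k) = (e j *\<^sub>v unit_vec n k) $ i"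
        using proj_mat_index[OF ik, of "img n t e" t j] j by simp
      also have "\<dots> = e j $$ (i,k)" by (rule mat_col_unit[OF c ik])
      finally show "proj_mat n (img n t e) t j $$ (i,k) = e j $$ (i,k)" .
    qed (use c in auto)
    thus ?thesis using j unfolding proj_tuple_def by simp
  qed
qed

lemma img_proj: fixes V :: "nat \<Rightarrow> 'a::field vec set"
  assumes BD: "V \<in> block_decomps n As t"
  shows "img n t (proj_tuple n t V) = V"
proof
  fix j
  show "img n t (proj_tuple n t V) j = V j"
  proof (cases "j < t")
    case False
    thus ?thesis using BD_D(1)[OF BD] unfolding img_def by (auto simp: PiE_def extensional_def)
  next
    case j: True
    have "(\<lambda>x. proj_mat n V t j *\<^sub>v x) ` carrier_vec n = V j"
    proof
      show "(\<lambda>x. proj_mat n V t j *\<^sub>v x) ` carrier_vec n \<subseteq> V j"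
        using BD_proj(2)[OF BD _ j] by auto
      show "V j \<subseteq> (\<lambda>x. proj_mat n V t j *\<^sub>v x) ` carrier_vec n"
      proof
        fix v assume v: "v \<in> V j"
        have "proj_mat n V t j *\<^sub>v v = v" using BD_single[OF BD j v j] by simp
        thus "v \<in> (\<lambda>x. proj_mat n V t j *\<^sub>v x) ` carrier_vec n"
          using BD_carrier[OF BD j v] by (metis image_eqI)
      qed
    qed
    thus ?thesis using j unfolding img_def proj_tuple_def by simp
  qed
qed

lemma bij_part: fixes As :: "'a::field mat list"
  assumes dims: "\<forall>A\<in>set As. A \<in> carrier_mat n n"
    and sym: "\<forall>A\<in>set As. transpose_mat A = A"
  shows "bij_betw (proj_tuple n t) (block_decomps n As t) (orth_idems n As t)"
proof (rule bij_betw_byWitness[where f' = "img n t"])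
  show "\<forall>a\<in>block_decomps n As t. img n t (proj_tuple n t a) = a" using img_proj by blast
  show "\<forall>a'\<in>orth_idems n As t. proj_tuple n t (img n t a') = a'" using proj_img[OF _ dims sym] by blast
  show "proj_tuple n t ` block_decomps n As t \<subseteq> orth_idems n As t" using BD_idems[OF _ dims sym] by blast
  show "img n t ` orth_idems n As t \<subseteq> block_decomps n As t" using img_BD[OF _ dims sym] by blast
qed

fun blk :: "nat list \<Rightarrow> nat \<Rightarrow> nat" where
  "blk [] a = 0"
| "blk (m # ns) a = (if a < m then 0 else Suc (blk ns (a - m)))"

definition blocks_ok :: "nat list \<Rightarrow> 'a mat list \<Rightarrow> bool" where
  "blocks_ok ns Bs \<longleftrightarrow> length Bs = length ns \<and> (\<forall>j<length ns. Bs ! j \<in> carrier_mat (ns ! j) (ns ! j))"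

lemma blk_less: "a < sum_list ns \<Longrightarrow> blk ns a < length ns"
  by (induction ns arbitrary: a, auto)

lemma blk_exists: "j < length ns \<Longrightarrow> ns ! j \<ge> 1 \<Longrightarrow> \<exists>a<sum_list ns. blk ns a = j"
proof (induction ns arbitrary: j)
  case Nil thus ?case by simp
next
  case (Cons m ns)
  show ?case
  proof (cases j)
    case 0
    thus ?thesis using Cons.prems by (intro exI[of _ 0], auto)
  next
    case (Suc j')
    with Cons.prems have "j' < length ns" "ns ! j' \<ge> 1" by auto
    from Cons.IH[OF this] obtain a where a: "a < sum_list ns" "blk ns a = j'" by auto
    show ?thesis using a Suc by (intro exI[of _ "m + a"], auto)
  qed
qed

lemma blocks_ok_Cons: "blocks_ok (m # ns) Bs \<longleftrightarrow> (\<exists>B Bs'. Bs = B # Bs' \<and> B \<in> carrier_mat m m \<and> blocks_ok ns Bs')"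
proof
  assume h: "blocks_ok (m # ns) Bs"
  then obtain B Bs' where Bs: "Bs = B # Bs'" unfolding blocks_ok_def by (cases Bs, auto)
  have "B \<in> carrier_mat m m" using h Bs unfolding blocks_ok_def by force
  moreover have "blocks_ok ns Bs'" using h Bs unfolding blocks_ok_def by force
  ultimately show "\<exists>B Bs'. Bs = B # Bs' \<and> B \<in> carrier_mat m m \<and> blocks_ok ns Bs'" using Bs by blast
next
  assume "\<exists>B Bs'. Bs = B # Bs' \<and> B \<in> carrier_mat m m \<and> blocks_ok ns Bs'"
  then obtain B Bs' where "Bs = B # Bs'" "B \<in> carrier_mat m m" "blocks_ok ns Bs'" by blast
  thus "blocks_ok (m # ns) Bs" unfolding blocks_ok_def by (auto simp: nth_Cons split: nat.split)
qed

lemma diag_carrier: "blocks_ok ns Bs \<Longrightarrow> diag_block_mat Bs \<in> carrier_mat (sum_list ns) (sum_list ns)"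
proof (induction ns arbitrary: Bs)
  case Nil thus ?case unfolding blocks_ok_def by auto
next
  case (Cons m ns)
  then obtain B Bs' where Bs: "Bs = B # Bs'" "B \<in> carrier_mat m m" "blocks_ok ns Bs'"
    using blocks_ok_Cons by blast
  have D: "diag_block_mat Bs' \<in> carrier_mat (sum_list ns) (sum_list ns)" using Cons.IH Bs(3) .
  show ?case unfolding Bs(1) using Bs(2) D by (simp add: Let_def)
qed

lemma diag_zero: "blocks_ok ns Bs \<Longrightarrow> a < sum_list ns \<Longrightarrow> b < sum_list ns \<Longrightarrow> blk ns a \<noteq> blk ns b
  \<Longrightarrow> diag_block_mat Bs $$ (a,b) = 0"
proof (induction ns arbitrary: Bs a b)
  case Nil thus ?case by simp
next
  case (Cons m ns)
  then obtain B Bs' where Bs: "Bs = B # Bs'" "B \<in> carrier_mat m m" "blocks_ok ns Bs'"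
    using blocks_ok_Cons by blast
  have D: "diag_block_mat Bs' \<in> carrier_mat (sum_list ns) (sum_list ns)" by (rule diag_carrier[OF Bs(3)])
  have dims: "dim_row B = m" "dim_col B = m" "dim_row (diag_block_mat Bs') = sum_list ns"
    "dim_col (diag_block_mat Bs') = sum_list ns" using Bs(2) D by auto
  have e: "diag_block_mat Bs $$ (a,b) = (if a < m then if b < m then B $$ (a,b) else 0
     else if b < m then 0 else diag_block_mat Bs' $$ (a - m, b - m))"
    unfolding Bs(1) using Cons.prems(2,3) dims by (simp add: Let_def)
  show ?case
  proof (cases "a < m")
    case True
    thus ?thesis using e Cons.prems(4) by (cases "b < m", auto)
  next
    case False
    show ?thesis
    proof (cases "b < m")
      case True thus ?thesis using e False by simp
    next
      case bF: False
      have "diag_block_mat Bs' $$ (a - m, b - m) = 0"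
        using Cons.IH[OF Bs(3)] Cons.prems(2,3,4) False bF by auto
      thus ?thesis using e False bF by simp
    qed
  qed
qed

lemma diag_exists: fixes M :: "'a::zero mat"
  shows "M \<in> carrier_mat (sum_list ns) (sum_list ns) \<Longrightarrow>
    (\<And>a b. a < sum_list ns \<Longrightarrow> b < sum_list ns \<Longrightarrow> blk ns a \<noteq> blk ns b \<Longrightarrow> M $$ (a,b) = 0) \<Longrightarrow>
    \<exists>Bs. blocks_ok ns Bs \<and> M = diag_block_mat Bs"
proof (induction ns arbitrary: M)
  case Nil
  have "M = diag_block_mat []" using Nil.prems(1) by (intro eq_matI, auto)
  thus ?case unfolding blocks_ok_def by auto
next
  case (Cons m ns)
  let ?s = "sum_list ns"
  define M1 where "M1 = mat m m (\<lambda>(i,j). M $$ (i,j))"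
  define M4 where "M4 = mat ?s ?s (\<lambda>(i,j). M $$ (i + m, j + m))"
  have M4c: "M4 \<in> carrier_mat ?s ?s" unfolding M4_def by simp
  have "\<exists>Bs. blocks_ok ns Bs \<and> M4 = diag_block_mat Bs"
  proof (rule Cons.IH[OF M4c])
    fix a b assume a: "a < ?s" and b: "b < ?s" and ab: "blk ns a \<noteq> blk ns b"
    have "M $$ (a + m, b + m) = 0" using Cons.prems(2)[of "a + m" "b + m"] a b ab by auto
    thus "M4 $$ (a,b) = 0" unfolding M4_def using a b by simp
  qed
  then obtain Bs' where Bs': "blocks_ok ns Bs'" "M4 = diag_block_mat Bs'" by blast
  have M1c: "M1 \<in> carrier_mat m m" unfolding M1_def by simp
  have ok: "blocks_ok (m # ns) (M1 # Bs')" using blocks_ok_Cons M1c Bs'(1) by blast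
  have "M = diag_block_mat (M1 # Bs')"
  proof (rule eq_matI)
    have dims: "dim_row M1 = m" "dim_col M1 = m" "dim_row (diag_block_mat Bs') = ?s"
      "dim_col (diag_block_mat Bs') = ?s" using M1c diag_carrier[OF Bs'(1)] by auto
    fix i j assume "i < dim_row (diag_block_mat (M1 # Bs'))" "j < dim_col (diag_block_mat (M1 # Bs'))"
    hence ij: "i < m + ?s" "j < m + ?s" using dims by (auto simp: Let_def)
    have e: "diag_block_mat (M1 # Bs') $$ (i,j) = (if i < m then if j < m then M1 $$ (i,j) else 0
       else if j < m then 0 else M4 $$ (i - m, j - m))"
      using ij dims Bs'(2) by (simp add: Let_def)
    show "M $$ (i,j) = diag_block_mat (M1 # Bs') $$ (i,j)"
    proof (cases "i < m"; cases "j < m")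
      assume "i < m" "j < m" thus ?thesis using e unfolding M1_def by simp
    next
      assume "i < m" "\<not> j < m" thus ?thesis using e Cons.prems(2)[of i j] ij by simp
    next
      assume "\<not> i < m" "j < m" thus ?thesis using e Cons.prems(2)[of i j] ij by simp
    next
      assume "\<not> i < m" "\<not> j < m" thus ?thesis using e ij unfolding M4_def by simp
    qed
  qed (use Cons.prems(1) diag_carrier[OF ok] in auto)
  thus ?case using ok by blast
qed

lemma concat_nth_blk: "a < length (concat Ls) \<Longrightarrow> concat Ls ! a \<in> set (Ls ! blk (map length Ls) a)"
proof (induction Ls arbitrary: a)
  case Nil thus ?case by simp
next
  case (Cons L Ls)
  show ?case
  proof (cases "a < length L")
    case True thus ?thesis by (simp add: nth_append)
  next
    case False
    hence "a - length L < length (concat Ls)" using Cons.prems by simp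
    from Cons.IH[OF this] False show ?thesis by (simp add: nth_append)
  qed
qed

definition DG :: "nat \<Rightarrow> (nat \<Rightarrow> 'a::field) \<Rightarrow> 'a mat" where
  "DG n f = mat n n (\<lambda>(a,b). if a = b then f a else 0)"

lemma DG_carrier[simp]: "DG n f \<in> carrier_mat n n" unfolding DG_def by simp
lemma DG_dim[simp]: "dim_row (DG n f) = n" "dim_col (DG n f) = n" unfolding DG_def by simp_all
lemma DG_index: "a < n \<Longrightarrow> b < n \<Longrightarrow> DG n f $$ (a,b) = (if a = b then f a else 0)"
  unfolding DG_def by simp

lemma DG_mult_left: assumes M: "M \<in> carrier_mat n n" and a: "a < n" and b: "b < n"
  shows "(DG n f * M) $$ (a,b) = f a * M $$ (a,b)"
proof -
  have "(DG n f * M) $$ (a,b) = (\<Sum>k\<in>{0..<n}. DG n f $$ (a,k) * M $$ (k,b))"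
    using M a b by (simp add: scalar_prod_def)
  also have "\<dots> = (\<Sum>k\<in>{0..<n}. if k = a then f a * M $$ (a,b) else 0)"
    by (rule sum.cong[OF refl], simp add: DG_index a)
  also have "\<dots> = f a * M $$ (a,b)" using a by simp
  finally show ?thesis .
qed

lemma DG_mult_right: assumes M: "M \<in> carrier_mat n n" and a: "a < n" and b: "b < n"
  shows "(M * DG n f) $$ (a,b) = M $$ (a,b) * f b"
proof -
  have "(M * DG n f) $$ (a,b) = (\<Sum>k\<in>{0..<n}. M $$ (a,k) * DG n f $$ (k,b))"
    using M a b by (simp add: scalar_prod_def)
  also have "\<dots> = (\<Sum>k\<in>{0..<n}. if k = b then M $$ (a,b) * f b else 0)"
    by (rule sum.cong[OF refl], simp add: DG_index b)
  also have "\<dots> = M $$ (a,b) * f b" using b by simp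
  finally show ?thesis .
qed

lemma DG_transpose: "transpose_mat (DG n f) = DG n f"
  by (rule eq_matI, auto simp: DG_index)

lemma inv_obtain: fixes P :: "'a::field mat"
  assumes P: "P \<in> carrier_mat n n" and inv: "invertible_mat P"
  obtains Q where "Q \<in> carrier_mat n n" "P * Q = 1\<^sub>m n" "Q * P = 1\<^sub>m n"
proof -
  from inv obtain Q where PQ: "P * Q = 1\<^sub>m (dim_row P)" and QP: "Q * P = 1\<^sub>m (dim_row Q)"
    unfolding invertible_mat_def inverts_mat_def by blast
  have "dim_col Q = n" using PQ P by (metis carrier_matD(1) index_mult_mat(3) index_one_mat(3))
  moreover have "dim_row Q = n" using QP P by (metis carrier_matD(2) index_mult_mat(3) index_one_mat(3))
  ultimately show ?thesis using that[of Q] PQ QP P by auto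
qed

lemma msum_conj: fixes P Q :: "'a::field mat"
  assumes P: "P \<in> carrier_mat n n" and Q: "Q \<in> carrier_mat n n"
    and f: "\<And>j. j \<in> J \<Longrightarrow> f j \<in> carrier_mat n n"
  shows "msum n (\<lambda>j. P * f j * Q) J = P * msum n f J * Q"
proof (rule mat_eqI_vec[of _ n])
  fix v :: "'a vec" assume v: "v \<in> carrier_vec n"
  have Qv: "Q *\<^sub>v v \<in> carrier_vec n" using Q v by simp
  have "msum n (\<lambda>j. P * f j * Q) J *\<^sub>v v = vsum n (\<lambda>j. (P * f j * Q) *\<^sub>v v) J"
    by (rule msum_mult_vec[OF _ v], rule mult_carrier_mat[OF mult_carrier_mat[OF P f] Q])
  also have "\<dots> = vsum n (\<lambda>j. P *\<^sub>v (f j *\<^sub>v (Q *\<^sub>v v))) J"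
  proof (rule vsum_cong)
    fix j assume j: "j \<in> J"
    have fj: "f j \<in> carrier_mat n n" by (rule f[OF j])
    have "(P * f j * Q) *\<^sub>v v = (P * f j) *\<^sub>v (Q *\<^sub>v v)"
      by (rule assoc_mult_mat_vec[OF mult_carrier_mat[OF P fj] Q v])
    also have "\<dots> = P *\<^sub>v (f j *\<^sub>v (Q *\<^sub>v v))" by (rule assoc_mult_mat_vec[OF P fj Qv])
    finally show "(P * f j * Q) *\<^sub>v v = P *\<^sub>v (f j *\<^sub>v (Q *\<^sub>v v))" .
  qed
  also have "\<dots> = P *\<^sub>v vsum n (\<lambda>j. f j *\<^sub>v (Q *\<^sub>v v)) J"
    by (rule mult_vsum[OF P, symmetric], rule mult_mat_vec_carrier[OF f Qv])
  also have "vsum n (\<lambda>j. f j *\<^sub>v (Q *\<^sub>v v)) J = msum n f J *\<^sub>v (Q *\<^sub>v v)"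
    by (rule msum_mult_vec[OF f Qv, symmetric])
  also have "P *\<^sub>v (msum n f J *\<^sub>v (Q *\<^sub>v v)) = (P * msum n f J) *\<^sub>v (Q *\<^sub>v v)"
    by (rule assoc_mult_mat_vec[OF P msum_carrier Qv, symmetric])
  also have "\<dots> = (P * msum n f J * Q) *\<^sub>v v"
    by (rule assoc_mult_mat_vec[OF mult_carrier_mat[OF P msum_carrier] Q v, symmetric])
  finally show "msum n (\<lambda>j. P * f j * Q) J *\<^sub>v v = (P * msum n f J * Q) *\<^sub>v v" .
qed (use P Q in auto)

lemma sq_mult_carrier: "X \<in> carrier_mat n n \<Longrightarrow> Y \<in> carrier_mat n n \<Longrightarrow> X * Y \<in> carrier_mat n n"
  by simp
lemma sq_mult_vec_carrier: "X \<in> carrier_mat n n \<Longrightarrow> v \<in> carrier_vec n \<Longrightarrow> X *\<^sub>v v \<in> carrier_vec n"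
  by simp
lemma sq_assoc_vec: "X \<in> carrier_mat n n \<Longrightarrow> Y \<in> carrier_mat n n \<Longrightarrow> v \<in> carrier_vec n \<Longrightarrow>
  (X * Y) *\<^sub>v v = X *\<^sub>v (Y *\<^sub>v v)"
  by (rule assoc_mult_mat_vec)

lemmas sqsimps = sq_mult_carrier sq_mult_vec_carrier sq_assoc_vec

lemma P_to_OI: fixes As :: "'a::field mat list" and P :: "'a mat"
  assumes dims: "\<forall>A\<in>set As. A \<in> carrier_mat n n" and sym: "\<forall>A\<in>set As. transpose_mat A = A"
    and P: "P \<in> carrier_mat n n" and inv: "invertible_mat P" and len: "length ns = t"
    and pos: "\<forall>j<t. ns ! j \<ge> 1" and sn: "sum_list ns = n"
    and blocks: "\<forall>A\<in>set As. \<exists>Bs. length Bs = t \<and> (\<forall>j<t. Bs ! j \<in> carrier_mat (ns ! j) (ns ! j)) \<and>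
            transpose_mat P * A * P = diag_block_mat Bs"
  shows "orth_idems n As t \<noteq> {}"
proof -
  obtain Q where Q: "Q \<in> carrier_mat n n" and PQ: "P * Q = 1\<^sub>m n" and QP: "Q * P = 1\<^sub>m n"
    using inv_obtain[OF P inv] by blast
  define D where "D j = DG n (\<lambda>a. if blk ns a = j then 1 else (0::'a))" for j
  define e where "e = (\<lambda>j\<in>{..<t}. P * D j * Q)"
  have Dc: "D j \<in> carrier_mat n n" for j unfolding D_def by simp
  have PT: "transpose_mat P \<in> carrier_mat n n" and QT: "transpose_mat Q \<in> carrier_mat n n"
    using P Q by auto
  have QPT: "transpose_mat Q * transpose_mat P = 1\<^sub>m n"
    using transpose_mult[OF P Q] PQ by simp
  note ss = sqsimps[where n=n] P Q Dc PT QT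
  have cross: "(transpose_mat P * A * P) $$ (a,b) = 0"
    if A: "A \<in> set As" and a: "a < n" and b: "b < n" and ab: "blk ns a \<noteq> blk ns b" for A a b
  proof -
    obtain Bs where Bs: "length Bs = t" "\<forall>j<t. Bs ! j \<in> carrier_mat (ns ! j) (ns ! j)"
      "transpose_mat P * A * P = diag_block_mat Bs" using blocks A by blast
    have ok: "blocks_ok ns Bs" unfolding blocks_ok_def using Bs len by auto
    show ?thesis unfolding Bs(3) by (rule diag_zero[OF ok], use a b ab sn in auto)
  qed
  have DD: "D j * D l = (if j = l then D j else 0\<^sub>m n n)" for j l
  proof (rule eq_matI)
    fix a b assume "a < dim_row (if j = l then D j else 0\<^sub>m n n)" "b < dim_col (if j = l then D j else 0\<^sub>m n n)"
    hence a: "a < n" and b: "b < n" using Dc[of j] by (auto split: if_splits)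
    have "(D j * D l) $$ (a,b) = D j $$ (a,b) * (if blk ns b = l then 1 else 0)"
      unfolding D_def[of l] by (rule DG_mult_right[OF Dc[of j] a b])
    thus "(D j * D l) $$ (a,b) = (if j = l then D j else 0\<^sub>m n n) $$ (a,b)"
      using a b unfolding D_def by (auto simp: DG_index)
  qed (use Dc in auto)
  have comm: "(transpose_mat P * A * P) * D j = D j * (transpose_mat P * A * P)"
    if A: "A \<in> set As" for A j
  proof -
    have Ac: "A \<in> carrier_mat n n" using dims A by auto
    have Bc: "transpose_mat P * A * P \<in> carrier_mat n n" using Ac P by simp
    show ?thesis
    proof (rule eq_matI)
      fix a b assume "a < dim_row (D j * (transpose_mat P * A * P))" "b < dim_col (D j * (transpose_mat P * A * P))"
      hence a: "a < n" and b: "b < n" using Dc[of j] Bc by auto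
      have 1: "((transpose_mat P * A * P) * D j) $$ (a,b) = (transpose_mat P * A * P) $$ (a,b) * (if blk ns b = j then 1 else 0)"
        unfolding D_def by (rule DG_mult_right[OF Bc a b])
      have 2: "(D j * (transpose_mat P * A * P)) $$ (a,b) = (if blk ns a = j then 1 else 0) * (transpose_mat P * A * P) $$ (a,b)"
        unfolding D_def by (rule DG_mult_left[OF Bc a b])
      show "((transpose_mat P * A * P) * D j) $$ (a,b) = (D j * (transpose_mat P * A * P)) $$ (a,b)"
        unfolding 1 2 using cross[OF A a b] by (cases "blk ns a = blk ns b", auto)
    qed (use Dc[of j] Bc P in auto)
  qed
  have Bsym: "transpose_mat (transpose_mat P * A * P) = transpose_mat P * A * P"
    if A: "A \<in> set As" for A
  proof -
    have Ac: "A \<in> carrier_mat n n" using dims A by auto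
    have "transpose_mat (transpose_mat P * A * P) = transpose_mat P * transpose_mat (transpose_mat P * A)"
      by (rule transpose_mult[OF mult_carrier_mat[OF PT Ac] P])
    also have "transpose_mat (transpose_mat P * A) = transpose_mat A * P"
      using transpose_mult[OF PT Ac] by simp
    also have "transpose_mat P * (transpose_mat A * P) = transpose_mat P * A * P"
      using sym A Ac P PT by simp
    finally show ?thesis .
  qed
  have center: "transpose_mat (A * (P * D j * Q)) = A * (P * D j * Q)"
    if A: "A \<in> set As" for A j
  proof -
    have Ac: "A \<in> carrier_mat n n" using dims A by auto
    let ?B = "transpose_mat P * A * P"
    have Bc: "?B \<in> carrier_mat n n" by (intro sq_mult_carrier PT Ac P)
    have BDc: "?B * D j \<in> carrier_mat n n" by (intro sq_mult_carrier Bc Dc)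
    have QTPT: "\<And>w. w \<in> carrier_vec n \<Longrightarrow> transpose_mat Q *\<^sub>v (transpose_mat P *\<^sub>v w) = w"
    proof -
      fix w :: "'a vec" assume w: "w \<in> carrier_vec n"
      have "transpose_mat Q *\<^sub>v (transpose_mat P *\<^sub>v w) = (transpose_mat Q * transpose_mat P) *\<^sub>v w"
        by (rule sq_assoc_vec[OF QT PT w, symmetric])
      thus "transpose_mat Q *\<^sub>v (transpose_mat P *\<^sub>v w) = w" using QPT w by simp
    qed
    have eq: "A * (P * D j * Q) = transpose_mat Q * (?B * D j) * Q"
    proof (rule mat_eqI_vec[of _ n])
      fix v :: "'a vec" assume v: "v \<in> carrier_vec n"
      have PDc: "P * D j \<in> carrier_mat n n" by (rule sq_mult_carrier[OF P Dc])
      have PDQc: "P * D j * Q \<in> carrier_mat n n" by (rule sq_mult_carrier[OF PDc Q])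
      have QTBDc: "transpose_mat Q * (?B * D j) \<in> carrier_mat n n" by (rule sq_mult_carrier[OF QT BDc])
      have PTAc: "transpose_mat P * A \<in> carrier_mat n n" by (rule sq_mult_carrier[OF PT Ac])
      have Qv: "Q *\<^sub>v v \<in> carrier_vec n" by (rule sq_mult_vec_carrier[OF Q v])
      have DQv: "D j *\<^sub>v (Q *\<^sub>v v) \<in> carrier_vec n" by (rule sq_mult_vec_carrier[OF Dc Qv])
      have PDQv: "P *\<^sub>v (D j *\<^sub>v (Q *\<^sub>v v)) \<in> carrier_vec n" by (rule sq_mult_vec_carrier[OF P DQv])
      have APDQv: "A *\<^sub>v (P *\<^sub>v (D j *\<^sub>v (Q *\<^sub>v v))) \<in> carrier_vec n" by (rule sq_mult_vec_carrier[OF Ac PDQv])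
      have "(A * (P * D j * Q)) *\<^sub>v v = A *\<^sub>v ((P * D j * Q) *\<^sub>v v)" by (rule sq_assoc_vec[OF Ac PDQc v])
      also have "(P * D j * Q) *\<^sub>v v = (P * D j) *\<^sub>v (Q *\<^sub>v v)" by (rule sq_assoc_vec[OF PDc Q v])
      also have "\<dots> = P *\<^sub>v (D j *\<^sub>v (Q *\<^sub>v v))" by (rule sq_assoc_vec[OF P Dc Qv])
      also have "A *\<^sub>v (P *\<^sub>v (D j *\<^sub>v (Q *\<^sub>v v))) = transpose_mat Q *\<^sub>v (transpose_mat P *\<^sub>v (A *\<^sub>v (P *\<^sub>v (D j *\<^sub>v (Q *\<^sub>v v)))))"
        by (rule QTPT[OF APDQv, symmetric])
      also have "transpose_mat P *\<^sub>v (A *\<^sub>v (P *\<^sub>v (D j *\<^sub>v (Q *\<^sub>v v)))) = (transpose_mat P * A) *\<^sub>v (P *\<^sub>v (D j *\<^sub>v (Q *\<^sub>v v)))"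
        by (rule sq_assoc_vec[OF PT Ac PDQv, symmetric])
      also have "\<dots> = ?B *\<^sub>v (D j *\<^sub>v (Q *\<^sub>v v))" by (rule sq_assoc_vec[OF PTAc P DQv, symmetric])
      also have "\<dots> = (?B * D j) *\<^sub>v (Q *\<^sub>v v)" by (rule sq_assoc_vec[OF Bc Dc Qv, symmetric])
      also have "transpose_mat Q *\<^sub>v \<dots> = (transpose_mat Q * (?B * D j)) *\<^sub>v (Q *\<^sub>v v)"
        by (rule sq_assoc_vec[OF QT BDc Qv, symmetric])
      also have "\<dots> = (transpose_mat Q * (?B * D j) * Q) *\<^sub>v v" by (rule sq_assoc_vec[OF QTBDc Q v, symmetric])
      finally show "(A * (P * D j * Q)) *\<^sub>v v = (transpose_mat Q * (?B * D j) * Q) *\<^sub>v v" .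
    next
      show "A * (P * D j * Q) \<in> carrier_mat n n"
        by (intro sq_mult_carrier Ac P Q Dc)
      show "transpose_mat Q * (?B * D j) * Q \<in> carrier_mat n n"
        by (intro sq_mult_carrier QT BDc Q)
    qed
    have tr: "transpose_mat (transpose_mat Q * X * Q) = transpose_mat Q * transpose_mat X * Q"
      if X: "X \<in> carrier_mat n n" for X :: "'a mat"
    proof -
      have "transpose_mat (transpose_mat Q * X * Q) = transpose_mat Q * transpose_mat (transpose_mat Q * X)"
        by (rule transpose_mult[OF mult_carrier_mat[OF QT X] Q])
      also have "transpose_mat (transpose_mat Q * X) = transpose_mat X * Q"
        using transpose_mult[OF QT X] by simp
      also have "transpose_mat Q * (transpose_mat X * Q) = transpose_mat Q * transpose_mat X * Q"
        by (rule assoc_mult_mat[OF QT _ Q, symmetric], use X in simp)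
      finally show ?thesis .
    qed
    have "transpose_mat (?B * D j) = transpose_mat (D j) * transpose_mat ?B"
      by (rule transpose_mult[OF Bc Dc])
    also have "transpose_mat (D j) = D j" unfolding D_def by (rule DG_transpose)
    also have "transpose_mat ?B = ?B" by (rule Bsym[OF A])
    also have "D j * ?B = ?B * D j" by (rule comm[OF A, symmetric])
    finally have BDT: "transpose_mat (?B * D j) = ?B * D j" .
    show ?thesis unfolding eq tr[OF BDc] BDT ..
  qed
  have QPv: "\<And>w. w \<in> carrier_vec n \<Longrightarrow> Q *\<^sub>v (P *\<^sub>v w) = w"
  proof -
    fix w :: "'a vec" assume w: "w \<in> carrier_vec n"
    have "Q *\<^sub>v (P *\<^sub>v w) = (Q * P) *\<^sub>v w" by (rule sq_assoc_vec[OF Q P w, symmetric])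
    thus "Q *\<^sub>v (P *\<^sub>v w) = w" using QP w by simp
  qed
  have tv: "(X * Y * Z) *\<^sub>v v = X *\<^sub>v (Y *\<^sub>v (Z *\<^sub>v v))"
    if "X \<in> carrier_mat n n" "Y \<in> carrier_mat n n" "Z \<in> carrier_mat n n" "v \<in> carrier_vec n"
    for X Y Z :: "'a mat" and v
  proof -
    have "(X * Y * Z) *\<^sub>v v = (X * Y) *\<^sub>v (Z *\<^sub>v v)"
      by (rule sq_assoc_vec[OF sq_mult_carrier[OF that(1,2)] that(3,4)])
    also have "\<dots> = X *\<^sub>v (Y *\<^sub>v (Z *\<^sub>v v))"
      by (rule sq_assoc_vec[OF that(1,2) sq_mult_vec_carrier[OF that(3,4)]])
    finally show ?thesis .
  qed
  have conj_mult: "(P * X * Q) * (P * Y * Q) = P * (X * Y) * Q"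
    if X: "X \<in> carrier_mat n n" and Y: "Y \<in> carrier_mat n n" for X Y :: "'a mat"
  proof (rule mat_eqI_vec[of _ n])
    fix v :: "'a vec" assume v: "v \<in> carrier_vec n"
    have c1: "P * X * Q \<in> carrier_mat n n" "P * Y * Q \<in> carrier_mat n n"
      by (intro sq_mult_carrier P Q X Y)+
    have Qv: "Q *\<^sub>v v \<in> carrier_vec n" by (rule sq_mult_vec_carrier[OF Q v])
    have YQv: "Y *\<^sub>v (Q *\<^sub>v v) \<in> carrier_vec n" by (rule sq_mult_vec_carrier[OF Y Qv])
    have "((P * X * Q) * (P * Y * Q)) *\<^sub>v v = (P * X * Q) *\<^sub>v ((P * Y * Q) *\<^sub>v v)"
      by (rule sq_assoc_vec[OF c1 v])
    also have "(P * Y * Q) *\<^sub>v v = P *\<^sub>v (Y *\<^sub>v (Q *\<^sub>v v))" by (rule tv[OF P Y Q v])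
    also have "(P * X * Q) *\<^sub>v (P *\<^sub>v (Y *\<^sub>v (Q *\<^sub>v v))) = P *\<^sub>v (X *\<^sub>v (Q *\<^sub>v (P *\<^sub>v (Y *\<^sub>v (Q *\<^sub>v v)))))"
      by (rule tv[OF P X Q sq_mult_vec_carrier[OF P YQv]])
    also have "Q *\<^sub>v (P *\<^sub>v (Y *\<^sub>v (Q *\<^sub>v v))) = Y *\<^sub>v (Q *\<^sub>v v)" by (rule QPv[OF YQv])
    also have "X *\<^sub>v (Y *\<^sub>v (Q *\<^sub>v v)) = (X * Y) *\<^sub>v (Q *\<^sub>v v)" by (rule sq_assoc_vec[OF X Y Qv, symmetric])
    also have "P *\<^sub>v ((X * Y) *\<^sub>v (Q *\<^sub>v v)) = (P * (X * Y) * Q) *\<^sub>v v"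
      by (rule tv[OF P sq_mult_carrier[OF X Y] Q v, symmetric])
    finally show "((P * X * Q) * (P * Y * Q)) *\<^sub>v v = (P * (X * Y) * Q) *\<^sub>v v" .
  qed (intro sq_mult_carrier P Q X Y)+
  have conj_nz: "P * X * Q \<noteq> 0\<^sub>m n n"
    if X: "X \<in> carrier_mat n n" and Xnz: "X \<noteq> 0\<^sub>m n n" for X :: "'a mat"
  proof
    assume h: "P * X * Q = 0\<^sub>m n n"
    have "X = 0\<^sub>m n n"
    proof (rule mat_eqI_vec[OF X zero_carrier_mat])
      fix v :: "'a vec" assume v: "v \<in> carrier_vec n"
      have Pv: "P *\<^sub>v v \<in> carrier_vec n" by (rule sq_mult_vec_carrier[OF P v])
      have Xv: "X *\<^sub>v v \<in> carrier_vec n" by (rule sq_mult_vec_carrier[OF X v])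
      have "X *\<^sub>v v = X *\<^sub>v (Q *\<^sub>v (P *\<^sub>v v))" using QPv[OF v] by simp
      also have "\<dots> = Q *\<^sub>v (P *\<^sub>v (X *\<^sub>v (Q *\<^sub>v (P *\<^sub>v v))))"
        by (rule QPv[symmetric], intro sq_mult_vec_carrier X Q Pv)
      also have "P *\<^sub>v (X *\<^sub>v (Q *\<^sub>v (P *\<^sub>v v))) = (P * X * Q) *\<^sub>v (P *\<^sub>v v)"
        by (rule tv[OF P X Q Pv, symmetric])
      also have "\<dots> = 0\<^sub>v n" unfolding h by (rule zero_mat_mult_vec[OF Pv])
      also have "Q *\<^sub>v 0\<^sub>v n = 0\<^sub>v n" by (rule eq_vecI, use Q in \<open>auto simp: scalar_prod_def\<close>)
      finally show "X *\<^sub>v v = 0\<^sub>m n n *\<^sub>v v" using zero_mat_mult_vec[OF v] by simp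
    qed
    thus False using Xnz by simp
  qed
  have Dnz: "D j \<noteq> 0\<^sub>m n n" if j: "j < t" for j
  proof
    assume h: "D j = 0\<^sub>m n n"
    obtain a where a: "a < sum_list ns" "blk ns a = j" using blk_exists[of j ns] j len pos by auto
    have "D j $$ (a,a) = 1" using a sn unfolding D_def by (simp add: DG_index)
    thus False using h a sn by simp
  qed
  have Dsum: "msum n D {..<t} = 1\<^sub>m n"
  proof (rule eq_matI)
    fix a b assume "a < dim_row (1\<^sub>m n)" "b < dim_col (1\<^sub>m n)"
    hence a: "a < n" and b: "b < n" by auto
    have bl: "blk ns a < t" using blk_less[of a ns] a sn len by simp
    have "msum n D {..<t} $$ (a,b) = (\<Sum>j\<in>{..<t}. if a = b then (if blk ns a = j then 1 else 0) else 0)"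
      using a b by (simp add: D_def DG_index)
    also have "\<dots> = (if a = b then 1 else 0)" using bl by (cases "a = b", auto)
    finally show "msum n D {..<t} $$ (a,b) = 1\<^sub>m n $$ (a,b)" using a b by simp
  qed auto
  have "e \<in> orth_idems n As t"
    unfolding orth_idems_def mem_Collect_eq
  proof (intro conjI allI impI)
    show "e \<in> {..<t} \<rightarrow>\<^sub>E center n As"
      unfolding e_def center_def using center P Q Dc by (auto simp: ss)
    fix j assume j: "j < t"
    show "e j \<noteq> 0\<^sub>m n n" using conj_nz[OF Dc Dnz[OF j]] j unfolding e_def by simp
    show "e j * e j = e j" using conj_mult[OF Dc Dc, of j j] DD[of j j] j unfolding e_def by simp
    fix l assume l: "l < t" and jl: "j \<noteq> l"
    show "e j * e l = 0\<^sub>m n n" using conj_mult[OF Dc Dc, of j l] DD[of j l] j l jl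
      unfolding e_def by (simp add: carrier_matD[OF P] carrier_matD[OF Q])
  next
    have "msum n e {..<t} = msum n (\<lambda>j. P * D j * Q) {..<t}"
      unfolding msum_def e_def by simp
    also have "\<dots> = P * msum n D {..<t} * Q" by (rule msum_conj[OF P Q Dc])
    also have "\<dots> = 1\<^sub>m n" unfolding Dsum using P Q PQ by simp
    finally show "msum n e {..<t} = 1\<^sub>m n" .
  qed
  thus ?thesis by blast
qed

definition lc :: "nat \<Rightarrow> ('a::field vec \<Rightarrow> 'a) \<Rightarrow> 'a vec set \<Rightarrow> 'a vec" where
  "lc n c S = vec n (\<lambda>i. \<Sum>v\<in>S. c v * v $ i)"

definition LI :: "nat \<Rightarrow> 'a::field vec set \<Rightarrow> bool" where
  "LI n S \<longleftrightarrow> (\<forall>c. lc n c S = 0\<^sub>v n \<longrightarrow> (\<forall>v\<in>S. c v = 0))"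

lemma lc_carrier[simp]: "lc n c S \<in> carrier_vec n" unfolding lc_def by simp
lemma lc_index[simp]: "i < n \<Longrightarrow> lc n c S $ i = (\<Sum>v\<in>S. c v * v $ i)" unfolding lc_def by simp
lemma lc_dim[simp]: "dim_vec (lc n c S) = n" unfolding lc_def by simp

context vec_space
begin

lemma lincomb_lc: assumes S: "S \<subseteq> carrier_vec n" and fin: "finite S"
  shows "lincomb c S = lc n c S"
proof (rule eq_vecI)
  show "dim_vec (lincomb c S) = dim_vec (lc n c S)" using lincomb_dim[OF fin S] by simp
  fix i assume "i < dim_vec (lc n c S)"
  hence i: "i < n" by simp
  show "lincomb c S $ i = lc n c S $ i" using lincomb_index[OF i S] i by simp
qed

lemma LI_of_indpt: assumes S: "S \<subseteq> carrier_vec n" and fin: "finite S" and li: "lin_indpt S"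
  shows "LI n S"
  unfolding LI_def
proof (intro allI impI ballI)
  fix c v assume c: "lc n c S = 0\<^sub>v n" and v: "v \<in> S"
  show "c v = 0"
  proof (rule ccontr)
    assume cv: "c v \<noteq> 0"
    have "lin_dep S"
      by (rule lin_dep_crit[OF fin subset_refl _ v], insert cv c lincomb_lc[OF S fin], auto)
    thus False using li by simp
  qed
qed

lemma in_span_lc: assumes S: "S \<subseteq> carrier_vec n" and fin: "finite S" and x: "x \<in> span S"
  shows "\<exists>c. x = lc n c S"
proof -
  from finite_in_span[OF fin _ x] S obtain a where "lincomb a S = x" by auto
  thus ?thesis using lincomb_lc[OF S fin] by metis
qed

end

lemma vec_minus_zero_eq: fixes x y :: "'a::field vec" assumes "x \<in> carrier_vec n" "y \<in> carrier_vec n" "x - y = 0\<^sub>v n"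
  shows "x = y"
proof (rule eq_vecI)
  fix i assume "i < dim_vec y"
  hence i: "i < n" using assms by simp
  have d: "dim_vec y = n" using assms(2) by simp
  have "(x - y) $ i = 0" using assms(3) i by simp
  moreover have "(x - y) $ i = x $ i - y $ i" using i d by simp
  ultimately show "x $ i = y $ i" by simp
qed (use assms in simp)

lemma idem_basis: fixes E :: "'a::field mat"
  assumes E: "E \<in> carrier_mat n n" and EE: "E * E = E"
  shows "\<exists>B. finite B \<and> B \<subseteq> carrier_vec n \<and> (\<forall>v\<in>B. E *\<^sub>v v = v) \<and> LI n B \<and>
     (\<forall>x\<in>carrier_vec n. E *\<^sub>v x = x \<longrightarrow> (\<exists>c. x = lc n c B))"
proof -
  define K where "K = 1\<^sub>m n - E"
  have Kc: "K \<in> carrier_mat n n" unfolding K_def by (rule minus_carrier_mat[OF E])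
  have kx: "(K *\<^sub>v x = 0\<^sub>v n) = (E *\<^sub>v x = x)" if x: "x \<in> carrier_vec n" for x
  proof -
    have Kx: "K *\<^sub>v x = x - E *\<^sub>v x" unfolding K_def
      using minus_mult_distrib_mat_vec[OF one_carrier_mat E x] x by simp
    show ?thesis
    proof
      assume "K *\<^sub>v x = 0\<^sub>v n"
      hence "x = E *\<^sub>v x" using vec_minus_zero_eq[OF x _ ] Kx E x by simp
      thus "E *\<^sub>v x = x" by simp
    next
      assume "E *\<^sub>v x = x"
      thus "K *\<^sub>v x = 0\<^sub>v n" using Kx x by simp
    qed
  qed
  have ker: "mat_kernel K = {x \<in> carrier_vec n. E *\<^sub>v x = x}"
    unfolding mat_kernel_def using Kc kx by auto
  obtain B where fin: "finite B" and bas: "kernel.basis n K B"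
    using kernel_basis_exists[OF Kc] by blast
  interpret kernel n n K by (unfold_locales, rule Kc)
  have B: "Ker.lin_indpt B" "Ker.span B = mat_kernel K" "B \<subseteq> mat_kernel K"
    using bas unfolding Ker.basis_def by auto
  have li: "NC.lin_indpt B" using B(1) lindep_same[OF B(3)] by simp
  have sp: "NC.span B = mat_kernel K" using B(2) span_same[OF B(3)] by simp
  have Bc: "B \<subseteq> carrier_vec n" using B(3) ker by auto
  show ?thesis
  proof (intro exI conjI)
    show "finite B" by (rule fin)
    show "B \<subseteq> carrier_vec n" by (rule Bc)
    show "\<forall>v\<in>B. E *\<^sub>v v = v" using B(3) ker by auto
    show "LI n B" by (rule NC.LI_of_indpt[OF Bc fin li])
    show "\<forall>x\<in>carrier_vec n. E *\<^sub>v x = x \<longrightarrow> (\<exists>c. x = lc n c B)"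
    proof (intro ballI impI)
      fix x assume "x \<in> carrier_vec n" "E *\<^sub>v x = x"
      hence "x \<in> NC.span B" using sp ker by auto
      thus "\<exists>c. x = lc n c B" by (rule NC.in_span_lc[OF Bc fin])
    qed
  qed
qed

context vec_space
begin

lemma indpt_of_LI: fixes S :: "'a vec set" assumes S: "S \<subseteq> carrier_vec n" and fin: "finite S" and li: "LI n S"
  shows "lin_indpt S"
proof
  assume ld: "lin_dep S"
  from finite_lin_dep[OF fin ld] S obtain a v where h: "lincomb a S = 0\<^sub>v n" "v \<in> S" "a v \<noteq> 0"
    by auto
  have "lc n a S = 0\<^sub>v n" using h(1) lincomb_lc[OF S fin] by simp
  thus False using li h(2,3) unfolding LI_def by auto
qed

lemma LI_span_card: fixes S :: "'a vec set" assumes S: "S \<subseteq> carrier_vec n" and fin: "finite S" and li: "LI n S"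
  and sp: "\<And>x. x \<in> carrier_vec n \<Longrightarrow> \<exists>c. x = lc n c S"
  shows "card S = n"
proof -
  have "span S = carrier_vec n"
  proof
    show "span S \<subseteq> carrier_vec n" using span_is_subset2[of S] S by simp
    show "carrier_vec n \<subseteq> span S"
    proof
      fix x :: "'a vec" assume x: "x \<in> carrier_vec n"
      obtain c where c: "x = lc n c S" using sp[OF x] by blast
      have "lincomb c S \<in> span S" unfolding span_def using fin by auto
      thus "x \<in> span S" using c lincomb_lc[OF S fin] by simp
    qed
  qed
  hence "basis S" unfolding basis_def using indpt_of_LI[OF S fin li] S by simp
  from dim_basis[OF fin this] dim_is_n show ?thesis by simp
qed

end

lemma mult_lc: fixes M :: "'a::field mat"
  assumes M: "M \<in> carrier_mat n n" and S: "S \<subseteq> carrier_vec n" and fin: "finite S"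
  shows "M *\<^sub>v lc n c S = vec n (\<lambda>i. \<Sum>w\<in>S. c w * (M *\<^sub>v w) $ i)"
proof (rule eq_vecI)
  fix i assume "i < dim_vec (vec n (\<lambda>i. \<Sum>w\<in>S. c w * (M *\<^sub>v w) $ i))"
  hence i: "i < n" by simp
  have "(M *\<^sub>v lc n c S) $ i = (\<Sum>k<n. M $$ (i,k) * (\<Sum>w\<in>S. c w * w $ k))"
    using mult_vec_index[OF M lc_carrier i] by simp
  also have "\<dots> = (\<Sum>w\<in>S. c w * (\<Sum>k<n. M $$ (i,k) * w $ k))"
    by (simp add: sum_distrib_left sum.swap[of _ S] mult.left_commute)
  also have "\<dots> = (\<Sum>w\<in>S. c w * (M *\<^sub>v w) $ i)"
  proof (rule sum.cong[OF refl])
    fix w assume "w \<in> S"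
    hence w: "w \<in> carrier_vec n" using S by auto
    show "c w * (\<Sum>k<n. M $$ (i,k) * w $ k) = c w * (M *\<^sub>v w) $ i"
      using mult_vec_index[OF M w i] by simp
  qed
  finally show "(M *\<^sub>v lc n c S) $ i = vec n (\<lambda>i. \<Sum>w\<in>S. c w * (M *\<^sub>v w) $ i) $ i" using i by simp
qed (use M in simp)

lemma conj_entry: fixes P A :: "'a::field mat"
  assumes P: "P \<in> carrier_mat n n" and A: "A \<in> carrier_mat n n" and a: "a < n" and b: "b < n"
  shows "(transpose_mat P * A * P) $$ (a,b) = (P *\<^sub>v unit_vec n a) \<bullet> (A *\<^sub>v (P *\<^sub>v unit_vec n b))"
proof -
  have PT: "transpose_mat P \<in> carrier_mat n n" using P by simp
  have PTA: "transpose_mat P * A \<in> carrier_mat n n" using PT A by (rule mult_carrier_mat)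
  have w: "A *\<^sub>v (P *\<^sub>v unit_vec n b) \<in> carrier_vec n"
    by (rule mult_mat_vec_carrier[OF A mult_mat_vec_carrier[OF P unit_vec_carrier]])
  have "(transpose_mat P * A * P) $$ (a,b) = unit_vec n a \<bullet> ((transpose_mat P * A) *\<^sub>v (P *\<^sub>v unit_vec n b))"
    by (rule entry_form[OF PTA P a b])
  also have "(transpose_mat P * A) *\<^sub>v (P *\<^sub>v unit_vec n b) = transpose_mat P *\<^sub>v (A *\<^sub>v (P *\<^sub>v unit_vec n b))"
    by (rule assoc_mult_mat_vec[OF PT A mult_mat_vec_carrier[OF P unit_vec_carrier]])
  also have "unit_vec n a \<bullet> (transpose_mat P *\<^sub>v (A *\<^sub>v (P *\<^sub>v unit_vec n b))) =
     (transpose_mat (transpose_mat P) *\<^sub>v unit_vec n a) \<bullet> (A *\<^sub>v (P *\<^sub>v unit_vec n b))"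
    by (rule transpose_vec_mult_scalar[OF PT w unit_vec_carrier, symmetric])
  finally show ?thesis by simp
qed

lemma mat_of_cols_unit: fixes L :: "'a::field vec list" assumes L: "set L \<subseteq> carrier_vec n" and b: "b < length L"
  shows "mat_of_cols n L *\<^sub>v unit_vec (length L) b = L ! b"
proof (rule eq_vecI)
  have Lb: "L ! b \<in> carrier_vec n" using L b by auto
  fix i assume "i < dim_vec (L ! b)"
  hence i: "i < n" using Lb by simp
  have "(mat_of_cols n L *\<^sub>v unit_vec (length L) b) $ i = row (mat_of_cols n L) i \<bullet> unit_vec (length L) b"
    using i by simp
  also have "\<dots> = row (mat_of_cols n L) i $ b" by (rule scalar_prod_right_unit[OF b])
  also have "\<dots> = L ! b $ i" using i b unfolding mat_of_cols_def by simp
  finally show "(mat_of_cols n L *\<^sub>v unit_vec (length L) b) $ i = L ! b $ i" .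
next
  have "L ! b \<in> carrier_vec n" using assms nth_mem by blast
  thus "dim_vec (mat_of_cols n L *\<^sub>v unit_vec (length L) b) = dim_vec (L ! b)" by simp
qed

lemma mat_of_cols_mult_vec: fixes L :: "'a::field vec list" assumes L: "set L \<subseteq> carrier_vec n" and v: "v \<in> carrier_vec (length L)"
  and i: "i < n"
  shows "(mat_of_cols n L *\<^sub>v v) $ i = (\<Sum>a<length L. v $ a * L ! a $ i)"
proof -
  have "(mat_of_cols n L *\<^sub>v v) $ i = (\<Sum>a<length L. mat_of_cols n L $$ (i,a) * v $ a)"
    by (rule mult_vec_index[OF mat_of_cols_carrier(1) v i])
  also have "\<dots> = (\<Sum>a<length L. v $ a * L ! a $ i)"
    by (rule sum.cong[OF refl], use i in \<open>auto simp: mat_of_cols_def mult.commute\<close>)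
  finally show ?thesis .
qed

lemma OI_to_P: fixes As :: "'a::field mat list"
  assumes OI: "e \<in> orth_idems n As t"
    and dims: "\<forall>A\<in>set As. A \<in> carrier_mat n n"
    and sym: "\<forall>A\<in>set As. transpose_mat A = A"
  shows "\<exists>P ns. P \<in> carrier_mat n n \<and> invertible_mat P \<and> length ns = t \<and>
        (\<forall>j<t. ns ! j \<ge> 1) \<and> sum_list ns = n \<and>
        (\<forall>A\<in>set As. \<exists>Bs. length Bs = t \<and> (\<forall>j<t. Bs ! j \<in> carrier_mat (ns ! j) (ns ! j)) \<and>
            transpose_mat P * A * P = diag_block_mat Bs)"
proof -
  define QB where "QB j S \<longleftrightarrow> finite S \<and> S \<subseteq> carrier_vec n \<and> (\<forall>v\<in>S. e j *\<^sub>v v = v) \<and> LI n S \<and>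
     (\<forall>x\<in>carrier_vec n. e j *\<^sub>v x = x \<longrightarrow> (\<exists>c. x = lc n c S))" for j S
  have ex: "\<forall>j\<in>{..<t}. \<exists>S. QB j S"
  proof
    fix j assume "j \<in> {..<t}"
    hence j: "j < t" by simp
    show "\<exists>S. QB j S" unfolding QB_def by (rule idem_basis[OF OI_carrier[OF OI j] OI_D(3)[OF OI j]])
  qed
  from bchoice[OF ex] obtain B where B0: "\<forall>j\<in>{..<t}. QB j (B j)" by blast
  have B: "QB j (B j)" if "j < t" for j using B0 that by simp
  have Bfin: "\<And>j. j < t \<Longrightarrow> finite (B j)" using B unfolding QB_def by simp
  have Bc: "\<And>j. j < t \<Longrightarrow> B j \<subseteq> carrier_vec n" using B unfolding QB_def by simp
  have Bfix: "\<And>j v. j < t \<Longrightarrow> v \<in> B j \<Longrightarrow> e j *\<^sub>v v = v" using B unfolding QB_def by simp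
  have BLI: "\<And>j. j < t \<Longrightarrow> LI n (B j)" using B unfolding QB_def by simp
  have Bsp: "\<And>j x. j < t \<Longrightarrow> x \<in> carrier_vec n \<Longrightarrow> e j *\<^sub>v x = x \<Longrightarrow> \<exists>c. x = lc n c (B j)"
    using B unfolding QB_def by simp
  have zero_notin: "0\<^sub>v n \<notin> B j" if j: "j < t" for j
  proof
    assume z: "0\<^sub>v n \<in> B j"
    let ?c = "\<lambda>v. if v = 0\<^sub>v n then (1::'a) else 0"
    have "lc n ?c (B j) = 0\<^sub>v n"
    proof (rule eq_vecI)
      fix i assume "i < dim_vec (0\<^sub>v n :: 'a vec)"
      hence i: "i < n" by simp
      have "lc n ?c (B j) $ i = (\<Sum>v\<in>B j. ?c v * v $ i)" using i by simp
      also have "\<dots> = 0" by (rule sum.neutral, use i in simp)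
      finally show "lc n ?c (B j) $ i = (0\<^sub>v n :: 'a vec) $ i" using i by simp
    qed simp
    from BLI[OF j, unfolded LI_def, rule_format, OF this z] show False by simp
  qed
  have EB: "e j *\<^sub>v v = (if j = l then v else 0\<^sub>v n)" if j: "j < t" and l: "l < t" and v: "v \<in> B l" for j l v
  proof -
    have vc: "v \<in> carrier_vec n" using Bc[OF l] v by auto
    have "e j *\<^sub>v v = e j *\<^sub>v (e l *\<^sub>v v)" using Bfix[OF l v] by simp
    also have "\<dots> = (if j = l then e l *\<^sub>v v else 0\<^sub>v n)" by (rule OI_vec[OF OI j l vc])
    finally show ?thesis using Bfix[OF l v] by simp
  qed
  have disj: "B j \<inter> B l = {}" if j: "j < t" and l: "l < t" and jl: "j \<noteq> l" for j l
  proof (rule ccontr)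
    assume "B j \<inter> B l \<noteq> {}"
    then obtain v where v: "v \<in> B j" "v \<in> B l" by blast
    have "v = e j *\<^sub>v v" using Bfix[OF j v(1)] by simp
    also have "\<dots> = 0\<^sub>v n" using EB[OF j l v(2)] jl by simp
    finally show False using zero_notin[OF j] v(1) by simp
  qed
  have Bne: "B j \<noteq> {}" if j: "j < t" for j
  proof
    assume Be: "B j = {}"
    have "e j \<noteq> 0\<^sub>m n n" by (rule OI_D(2)[OF OI j])
    have "e j = 0\<^sub>m n n"
    proof (rule mat_eqI_vec[OF OI_carrier[OF OI j] zero_carrier_mat])
      fix x :: "'a vec" assume x: "x \<in> carrier_vec n"
      have y: "e j *\<^sub>v x \<in> carrier_vec n" using OI_carrier[OF OI j] x by simp
      have "e j *\<^sub>v (e j *\<^sub>v x) = e j *\<^sub>v x" using OI_vec[OF OI j j x] by simp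
      then obtain c where "e j *\<^sub>v x = lc n c (B j)" using Bsp[OF j y] by blast
      moreover have "lc n c (B j) = 0\<^sub>v n" unfolding Be lc_def by (rule eq_vecI, simp_all)
      ultimately have "e j *\<^sub>v x = 0\<^sub>v n" by simp
      thus "e j *\<^sub>v x = 0\<^sub>m n n *\<^sub>v x" using zero_mat_mult_vec[OF x] by simp
    qed
    thus False using OI_D(2)[OF OI j] by simp
  qed
  define U where "U = (\<Union>j\<in>{..<t}. B j)"
  have Ufin: "finite U" unfolding U_def using Bfin by auto
  have Uc: "U \<subseteq> carrier_vec n" unfolding U_def using Bc by auto
  have zmv: "M *\<^sub>v 0\<^sub>v n = 0\<^sub>v n" if "M \<in> carrier_mat n n" for M :: "'a mat"
    by (rule eq_vecI, use that in \<open>auto simp: scalar_prod_def\<close>)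
  have BU: "B j \<subseteq> U" if "j < t" for j unfolding U_def using that by auto
  have U_LI: "LI n U" unfolding LI_def
  proof (intro allI impI ballI)
    fix c v assume c0: "lc n c U = 0\<^sub>v n" and v: "v \<in> U"
    from v obtain j where j: "j < t" and vj: "v \<in> B j" unfolding U_def by auto
    have Ec: "e j \<in> carrier_mat n n" by (rule OI_carrier[OF OI j])
    have "e j *\<^sub>v lc n c U = vec n (\<lambda>i. \<Sum>w\<in>U. c w * (e j *\<^sub>v w) $ i)" by (rule mult_lc[OF Ec Uc Ufin])
    also have "\<dots> = lc n c (B j)"
    proof (rule eq_vecI)
      fix i assume "i < dim_vec (lc n c (B j))"
      hence i: "i < n" by simp
      have "(\<Sum>w\<in>U. c w * (e j *\<^sub>v w) $ i) = (\<Sum>w\<in>U. if w \<in> B j then c w * w $ i else 0)"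
      proof (rule sum.cong[OF refl])
        fix w assume "w \<in> U"
        then obtain l where l: "l < t" and wl: "w \<in> B l" unfolding U_def by auto
        have ew: "e j *\<^sub>v w = (if j = l then w else 0\<^sub>v n)" by (rule EB[OF j l wl])
        show "c w * (e j *\<^sub>v w) $ i = (if w \<in> B j then c w * w $ i else 0)"
        proof (cases "j = l")
          case True thus ?thesis using ew wl by simp
        next
          case False
          hence "w \<notin> B j" using disj[OF j l False] wl by auto
          thus ?thesis using ew False i by simp
        qed
      qed
      also have "\<dots> = (\<Sum>w\<in>{w\<in>U. w \<in> B j}. c w * w $ i)" by (rule sum.inter_filter[OF Ufin, symmetric])
      also have "{w\<in>U. w \<in> B j} = B j" using BU[OF j] by auto
      finally show "vec n (\<lambda>i. \<Sum>w\<in>U. c w * (e j *\<^sub>v w) $ i) $ i = lc n c (B j) $ i" using i by simp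
    qed simp
    finally have "lc n c (B j) = e j *\<^sub>v lc n c U" by simp
    also have "\<dots> = 0\<^sub>v n" unfolding c0 by (rule zmv[OF Ec])
    finally show "c v = 0" using BLI[OF j, unfolded LI_def, rule_format] vj by blast
  qed
  have U_span: "\<exists>c. x = lc n c U" if x: "x \<in> carrier_vec n" for x
  proof -
    have "\<forall>j\<in>{..<t}. \<exists>c. e j *\<^sub>v x = lc n c (B j)"
    proof
      fix j assume "j \<in> {..<t}"
      hence j: "j < t" by simp
      have y: "e j *\<^sub>v x \<in> carrier_vec n" using OI_carrier[OF OI j] x by simp
      have "e j *\<^sub>v (e j *\<^sub>v x) = e j *\<^sub>v x" using OI_vec[OF OI j j x] by simp
      thus "\<exists>c. e j *\<^sub>v x = lc n c (B j)" using Bsp[OF j y] by simp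
    qed
    from bchoice[OF this] obtain cc where cc: "\<forall>j\<in>{..<t}. e j *\<^sub>v x = lc n (cc j) (B j)" by blast
    define J where "J w = (THE j. j < t \<and> w \<in> B j)" for w
    have J: "J w = j" if "j < t" "w \<in> B j" for j w
      unfolding J_def
    proof (rule the_equality)
      show "j < t \<and> w \<in> B j" using that by simp
      fix l assume "l < t \<and> w \<in> B l"
      thus "l = j" using disj[of l j] that by blast
    qed
    define c where "c w = cc (J w) w" for w
    show ?thesis
    proof (intro exI eq_vecI)
      fix i assume "i < dim_vec (lc n c U)"
      hence i: "i < n" by simp
      have "lc n c U $ i = (\<Sum>w\<in>U. c w * w $ i)" using i by simp
      also have "\<dots> = (\<Sum>j\<in>{..<t}. \<Sum>w\<in>B j. c w * w $ i)"
        unfolding U_def by (rule sum.UNION_disjoint, use Bfin disj in auto)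
      also have "\<dots> = (\<Sum>j\<in>{..<t}. (e j *\<^sub>v x) $ i)"
      proof (rule sum.cong[OF refl])
        fix j assume "j \<in> {..<t}"
        hence j: "j < t" by simp
        have "(\<Sum>w\<in>B j. c w * w $ i) = (\<Sum>w\<in>B j. cc j w * w $ i)"
          by (rule sum.cong[OF refl], simp add: c_def J[OF j])
        also have "\<dots> = lc n (cc j) (B j) $ i" using i by simp
        also have "\<dots> = (e j *\<^sub>v x) $ i" using cc j by simp
        finally show "(\<Sum>w\<in>B j. c w * w $ i) = (e j *\<^sub>v x) $ i" .
      qed
      also have "\<dots> = vsum n (\<lambda>l. e l *\<^sub>v x) {..<t} $ i" using i by simp
      also have "\<dots> = x $ i" using OI_sum[OF OI x] by simp
      finally show "x $ i = lc n c U $ i" by simp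
    qed (use x in simp)
  qed
  have U_card: "card U = n" by (rule vec_space.LI_span_card[OF Uc Ufin U_LI U_span])
  have card_sum: "card U = (\<Sum>j\<in>{..<t}. card (B j))"
    unfolding U_def by (rule card_UN_disjoint, use Bfin disj in auto)
  define L where "L j = (SOME xs. set xs = B j \<and> distinct xs)" for j
  have L: "set (L j) = B j \<and> distinct (L j)" if "j < t" for j
    unfolding L_def by (rule someI_ex, rule finite_distinct_list[OF Bfin[OF that]])
  have Llen: "length (L j) = card (B j)" if "j < t" for j
    using L[OF that] distinct_card by metis
  define Ls where "Ls = map L [0..<t]"
  define ns where "ns = map length Ls"
  define LL where "LL = concat Ls"
  have Ls_nth: "Ls ! j = L j" if "j < t" for j unfolding Ls_def using that by simp
  have ns_len: "length ns = t" unfolding ns_def Ls_def by simp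
  have ns_nth: "ns ! j = card (B j)" if "j < t" for j
    unfolding ns_def using that Ls_nth[OF that] Llen[OF that] by (simp add: Ls_def)
  have ns_pos: "\<forall>j<t. ns ! j \<ge> 1"
  proof (intro allI impI)
    fix j assume j: "j < t"
    have "card (B j) > 0" using Bfin[OF j] Bne[OF j] by (simp add: card_gt_0_iff)
    thus "ns ! j \<ge> 1" using ns_nth[OF j] by simp
  qed
  have ns_eq: "ns = map (\<lambda>j. card (B j)) [0..<t]"
    unfolding ns_def Ls_def by (rule nth_equalityI, auto simp: Llen)
  have ns_sum: "sum_list ns = n"
  proof -
    have "sum_list ns = (\<Sum>j\<in>set [0..<t]. card (B j))"
      unfolding ns_eq by (rule sum.distinct_set_conv_list[symmetric], simp)
    also have "\<dots> = (\<Sum>j\<in>{..<t}. card (B j))" by (simp add: lessThan_atLeast0)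
    finally show ?thesis using card_sum U_card by simp
  qed
  have LL_len: "length LL = n" unfolding LL_def length_concat ns_def[symmetric] by (rule ns_sum)
  have LL_set: "set LL = U"
  proof -
    have "set LL = (\<Union>j\<in>{..<t}. set (L j))" unfolding LL_def Ls_def by (auto simp: lessThan_atLeast0)
    also have "\<dots> = U" unfolding U_def using L by auto
    finally show ?thesis .
  qed
  have LL_dist: "distinct LL" by (rule card_distinct, simp add: LL_set U_card LL_len)
  have LLc: "set LL \<subseteq> carrier_vec n" using LL_set Uc by simp
  define P where "P = mat_of_cols n LL"
  have Pc: "P \<in> carrier_mat n n" unfolding P_def using mat_of_cols_carrier(1)[of n LL] LL_len by simp
  have Pu: "P *\<^sub>v unit_vec n b = LL ! b" if "b < n" for b
    unfolding P_def using mat_of_cols_unit[OF LLc, of b] that LL_len by simp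
  have det: "det P \<noteq> 0"
  proof
    assume "det P = 0"
    then obtain v where v: "v \<in> carrier_vec n" "v \<noteq> 0\<^sub>v n" "P *\<^sub>v v = 0\<^sub>v n"
      using det_0_iff_vec_prod_zero_field[OF Pc] by blast
    have inj: "inj_on (\<lambda>a. LL ! a) {..<n}" by (rule inj_on_nth[OF LL_dist], use LL_len in simp)
    have img: "(\<lambda>a. LL ! a) ` {..<n} = U" unfolding LL_set[symmetric] using LL_len
      by (auto simp: set_conv_nth)
    define c where "c w = v $ (inv_into {..<n} (\<lambda>a. LL ! a) w)" for w
    have cLL: "c (LL ! a) = v $ a" if "a < n" for a
      unfolding c_def using inv_into_f_f[OF inj] that by simp
    have "lc n c U = P *\<^sub>v v"
    proof (rule eq_vecI)
      fix i assume "i < dim_vec (P *\<^sub>v v)"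
      hence i: "i < n" using Pc by simp
      have "(P *\<^sub>v v) $ i = (\<Sum>a<length LL. v $ a * LL ! a $ i)"
        unfolding P_def by (rule mat_of_cols_mult_vec[OF LLc _ i], use v LL_len in simp)
      also have "\<dots> = (\<Sum>a\<in>{..<n}. c (LL ! a) * LL ! a $ i)" using LL_len cLL by simp
      also have "\<dots> = (\<Sum>w\<in>(\<lambda>a. LL ! a) ` {..<n}. c w * w $ i)"
        by (rule sum.reindex[OF inj, symmetric, unfolded o_def])
      also have "\<dots> = lc n c U $ i" unfolding img using i by simp
      finally show "lc n c U $ i = (P *\<^sub>v v) $ i" by simp
    qed (use Pc in simp)
    hence lc0: "lc n c U = 0\<^sub>v n" using v(3) by simp
    have "v = 0\<^sub>v n"
    proof (rule eq_vecI)
      fix a assume "a < dim_vec (0\<^sub>v n :: 'a vec)"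
      hence a: "a < n" by simp
      have "LL ! a \<in> U" using LL_set LL_len a nth_mem by metis
      hence "c (LL ! a) = 0" using U_LI lc0 unfolding LI_def by blast
      thus "v $ a = (0\<^sub>v n :: 'a vec) $ a" using cLL[OF a] a by simp
    qed (use v in simp)
    thus False using v(2) by simp
  qed
  have inv: "invertible_mat P"
  proof -
    from det_non_zero_imp_unit[OF Pc det, of "()"]
    obtain Q where Q: "Q \<in> carrier_mat n n" "Q * P = 1\<^sub>m n" "P * Q = 1\<^sub>m n"
      unfolding Units_def ring_mat_def by auto
    show ?thesis unfolding invertible_mat_def inverts_mat_def
      using Pc Q by (intro conjI exI[of _ Q], auto)
  qed
  have Bimg: "v \<in> img n t e j" if j: "j < t" and v: "v \<in> B j" for j v
  proof -
    have "v = e j *\<^sub>v v" using Bfix[OF j v] by simp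
    moreover have "v \<in> carrier_vec n" using Bc[OF j] v by auto
    ultimately show ?thesis unfolding img_def using j by auto
  qed
  have BD: "img n t e \<in> block_decomps n As t" by (rule img_BD[OF OI dims sym])
  have blocks: "\<exists>Bs. length Bs = t \<and> (\<forall>j<t. Bs ! j \<in> carrier_mat (ns ! j) (ns ! j)) \<and>
            transpose_mat P * A * P = diag_block_mat Bs" if A: "A \<in> set As" for A
  proof -
    have Ac: "A \<in> carrier_mat n n" using dims A by auto
    have Mc: "transpose_mat P * A * P \<in> carrier_mat (sum_list ns) (sum_list ns)"
      unfolding ns_sum using Pc Ac by simp
    have "\<exists>Bs. blocks_ok ns Bs \<and> transpose_mat P * A * P = diag_block_mat Bs"
    proof (rule diag_exists[OF Mc])
      fix a b assume a: "a < sum_list ns" and b: "b < sum_list ns" and ab: "blk ns a \<noteq> blk ns b"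
      have a': "a < n" and b': "b < n" using a b ns_sum by auto
      have ja: "blk ns a < t" and jb: "blk ns b < t" using blk_less[OF a] blk_less[OF b] ns_len by auto
      have "LL ! a \<in> set (Ls ! blk (map length Ls) a)" unfolding LL_def
        by (rule concat_nth_blk, use a' LL_len LL_def in simp)
      hence xa: "LL ! a \<in> B (blk ns a)" using Ls_nth[OF ja] L[OF ja] unfolding ns_def by simp
      have "LL ! b \<in> set (Ls ! blk (map length Ls) b)" unfolding LL_def
        by (rule concat_nth_blk, use b' LL_len LL_def in simp)
      hence xb: "LL ! b \<in> B (blk ns b)" using Ls_nth[OF jb] L[OF jb] unfolding ns_def by simp
      have "(transpose_mat P * A * P) $$ (a,b) = (P *\<^sub>v unit_vec n a) \<bullet> (A *\<^sub>v (P *\<^sub>v unit_vec n b))"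
        by (rule conj_entry[OF Pc Ac a' b'])
      also have "\<dots> = (LL ! a) \<bullet> (A *\<^sub>v (LL ! b))" using Pu[OF a'] Pu[OF b'] by simp
      also have "\<dots> = 0"
        by (rule BD_D(5)[OF BD A ja jb ab Bimg[OF ja xa] Bimg[OF jb xb]])
      finally show "(transpose_mat P * A * P) $$ (a,b) = 0" .
    qed
    then obtain Bs where Bs: "blocks_ok ns Bs" "transpose_mat P * A * P = diag_block_mat Bs" by blast
    show ?thesis using Bs ns_len unfolding blocks_ok_def by auto
  qed
  show ?thesis using Pc inv ns_len ns_pos ns_sum blocks by blast
qed

theorem mainTheorem1:
  fixes As :: "'k::field mat list" and n t :: nat
  assumes char: "(2::'k) \<noteq> 0"
    and dims: "\<forall>A\<in>set As. A \<in> carrier_mat n n"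
    and sym: "\<forall>A\<in>set As. transpose_mat A = A"
    and t: "t \<ge> 1"
  shows "bij_betw (proj_tuple n t) (block_decomps n As t) (orth_idems n As t) \<and>
    ((\<exists>P ns. P \<in> carrier_mat n n \<and> invertible_mat P \<and> length ns = t \<and>
        (\<forall>j<t. ns ! j \<ge> 1) \<and> sum_list ns = n \<and>
        (\<forall>A\<in>set As. \<exists>Bs. length Bs = t \<and> (\<forall>j<t. Bs ! j \<in> carrier_mat (ns ! j) (ns ! j)) \<and>
            transpose_mat P * A * P = diag_block_mat Bs))
     \<longleftrightarrow> orth_idems n As t \<noteq> {})"
proof
  show "bij_betw (proj_tuple n t) (block_decomps n As t) (orth_idems n As t)"
    by (rule bij_part[OF dims sym])
  show "(\<exists>P ns. P \<in> carrier_mat n n \<and> invertible_mat P \<and> length ns = t \<and>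
        (\<forall>j<t. ns ! j \<ge> 1) \<and> sum_list ns = n \<and>
        (\<forall>A\<in>set As. \<exists>Bs. length Bs = t \<and> (\<forall>j<t. Bs ! j \<in> carrier_mat (ns ! j) (ns ! j)) \<and>
            transpose_mat P * A * P = diag_block_mat Bs))
     \<longleftrightarrow> orth_idems n As t \<noteq> {}"
  proof
    assume "\<exists>P ns. P \<in> carrier_mat n n \<and> invertible_mat P \<and> length ns = t \<and>
        (\<forall>j<t. ns ! j \<ge> 1) \<and> sum_list ns = n \<and>
        (\<forall>A\<in>set As. \<exists>Bs. length Bs = t \<and> (\<forall>j<t. Bs ! j \<in> carrier_mat (ns ! j) (ns ! j)) \<and>
            transpose_mat P * A * P = diag_block_mat Bs)"
    then obtain P ns where h: "P \<in> carrier_mat n n" "invertible_mat P" "length ns = t"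
        "\<forall>j<t. ns ! j \<ge> 1" "sum_list ns = n"
        "\<forall>A\<in>set As. \<exists>Bs. length Bs = t \<and> (\<forall>j<t. Bs ! j \<in> carrier_mat (ns ! j) (ns ! j)) \<and>
            transpose_mat P * A * P = diag_block_mat Bs" by blast
    show "orth_idems n As t \<noteq> {}" by (rule P_to_OI[OF dims sym h])
  next
    assume "orth_idems n As t \<noteq> {}"
    then obtain e where e: "e \<in> orth_idems n As t" by blast
    show "\<exists>P ns. P \<in> carrier_mat n n \<and> invertible_mat P \<and> length ns = t \<and>
        (\<forall>j<t. ns ! j \<ge> 1) \<and> sum_list ns = n \<and>
        (\<forall>A\<in>set As. \<exists>Bs. length Bs = t \<and> (\<forall>j<t. Bs ! j \<in> carrier_mat (ns ! j) (ns ! j)) \<and>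
            transpose_mat P * A * P = diag_block_mat Bs)"
      by (rule OI_to_P[OF e dims sym])
  qed
qed

end
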